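(* Let $\rho$ be a state of a $d$-dimensional system ($d<\infty$), let $A,B$ be two copies of this system with $\rho_A=\rho_B=\rho$, and let $j\neq0$ be an integer. Let $d^{(j)}:=\dim\mathcal{V}^{(j)}_{\rm in}$, where $\mathcal{V}^{(j)}_{\rm in}:=\mathrm{span}\{|n+j,m\rangle\langle n,m|\}_{n,m}$ (over all $n,m$ with $n,n+j,m\in\{0,\dots,d-1\}$). Then $$\Delta M_A^{(j)}\le\big\|(\rho_A\otimes\rho_B)^{(j)}\big\|_{d^{(j)}\text{-KF}}-\|\rho^{(j)}\|_1.$$
   Context: Local observable $L=\sum_{n=0}^{d-1}n|n\rangle\langle n|$ on each system, $L_{AB}=L\otimes\mathbb{I}+\mathbb{I}\otimes L$. For a single system, $\rho^{(j)}:=\sum_{n}|n+j\rangle\langle n+j|\rho|n\rangle\langle n|$ (terms with $n+j$ out of range omitted). For the bipartite system, the $j$th mode is $X^{(j)}:=\sum_c\Pi_{c+j}X\Pi_c$, with $\Pi_c$ the projector onto the eigenvalue-$c$ eigenspace of $L_{AB}$. $M^{(j)}(\sigma):=\|\sigma^{(j)}\|_1$ (trace norm). $\Delta M_A^{(j)}:=\max_{V_{AB}}M^{(j)}(\sigma_A)-M^{(j)}(\rho)$, with $\sigma_A=\mathrm{tr}_B[V_{AB}(\rho\otimes\rho)V_{AB}^\dagger]$ and the maximum over all unitaries with $[V_{AB},L_{AB}]=0$. For an operator $P$, $\|P\|_{\alpha\text{-KF}}$ is the Ky-Fan $\alpha$-norm, the sum of the $\alpha$ largest singular values of $P$. *)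

theory Defs
  imports "Jordan_Normal_Form.Schur_Decomposition" "Jordan_Normal_Form.Char_Poly"
          "HOL-Library.Function_Algebras"
begin

(* Operators on the bipartite system AB are (d*d) x (d*d)
   complex matrices, basis vector |a,b> having index a*d + b. *)

definition singular_values :: "complex mat \<Rightarrow> real list" where
  "singular_values A = (THE \<sigma>. length \<sigma> = dim_col A \<and> sorted_wrt (\<ge>) \<sigma> \<and>
      (\<forall>s\<in>set \<sigma>. 0 \<le> s) \<and>
      char_poly (mat_adjoint A * A) = (\<Prod>s\<leftarrow>\<sigma>. [:- complex_of_real (s^2), 1:]))"

definition trace_norm :: "complex mat \<Rightarrow> real" where
  "trace_norm A = sum_list (singular_values A)"

definition ky_fan_norm :: "nat \<Rightarrow> complex mat \<Rightarrow> real" where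
  "ky_fan_norm \<alpha> A = sum_list (take \<alpha> (singular_values A))"

definition hermitian :: "complex mat \<Rightarrow> bool" where
  "hermitian A \<longleftrightarrow> mat_adjoint A = A"

definition density :: "nat \<Rightarrow> complex mat \<Rightarrow> bool" where
  "density d \<rho> \<longleftrightarrow> \<rho> \<in> carrier_mat d d \<and> hermitian \<rho> \<and>
     (\<forall>v\<in>carrier_vec d. 0 \<le> Re (\<Sum>i<d. cnj (v $ i) * (\<rho> *\<^sub>v v) $ i)) \<and>
     (\<Sum>i<d. \<rho> $$ (i,i)) = 1"

definition unitary :: "nat \<Rightarrow> complex mat \<Rightarrow> bool" where
  "unitary n V \<longleftrightarrow> V \<in> carrier_mat n n \<and> V * mat_adjoint V = 1\<^sub>m n \<and> mat_adjoint V * V = 1\<^sub>m n"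

definition mode1 :: "int \<Rightarrow> complex mat \<Rightarrow> complex mat" where
  "mode1 j \<rho> = mat (dim_row \<rho>) (dim_col \<rho>)
     (\<lambda>(r,c). if int r = int c + j then \<rho> $$ (r,c) else 0)"

definition Mj :: "int \<Rightarrow> complex mat \<Rightarrow> real" where
  "Mj j \<sigma> = trace_norm (mode1 j \<sigma>)"

(* local observable L_AB = L (x) I + I (x) L, diagonal with eigenvalue a+b on |a,b> *)
definition LAB :: "nat \<Rightarrow> complex mat" where
  "LAB d = mat (d*d) (d*d) (\<lambda>(r,c). if r = c then of_nat (r div d + r mod d) else 0)"

definition PiAB :: "nat \<Rightarrow> int \<Rightarrow> complex mat" where
  "PiAB d c = mat (d*d) (d*d) (\<lambda>(r,s). if r = s \<and> int (r div d + r mod d) = c then 1 else 0)"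

(* j-th mode of a bipartite operator: X^(j) = sum_c Pi_{c+j} X Pi_c,
   c ranging over the eigenvalues 0..2d-2 of L_AB *)
definition mode2 :: "nat \<Rightarrow> int \<Rightarrow> complex mat \<Rightarrow> complex mat" where
  "mode2 d j X = foldr (\<lambda>c acc. PiAB d (c + j) * X * PiAB d c + acc) [0..2 * int d - 2]
     (0\<^sub>m (d*d) (d*d))"

definition tensor :: "nat \<Rightarrow> complex mat \<Rightarrow> complex mat \<Rightarrow> complex mat" where
  "tensor d X Y = mat (d*d) (d*d) (\<lambda>(r,c). X $$ (r div d, c div d) * Y $$ (r mod d, c mod d))"

definition ptrace_B :: "nat \<Rightarrow> complex mat \<Rightarrow> complex mat" where
  "ptrace_B d X = mat d d (\<lambda>(a,a'). \<Sum>b<d. X $$ (a*d+b, a'*d+b))"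

definition DeltaM_A :: "nat \<Rightarrow> int \<Rightarrow> complex mat \<Rightarrow> real" where
  "DeltaM_A d j \<rho> =
     Sup {Mj j (ptrace_B d (V * tensor d \<rho> \<rho> * mat_adjoint V)) | V.
            unitary (d*d) V \<and> V * LAB d = LAB d * V} - Mj j \<rho>"

(* operators on AB as functions of (flattened) row/column index;
   complex scalar multiplication *)
definition opscale :: "complex \<Rightarrow> (nat \<Rightarrow> nat \<Rightarrow> complex) \<Rightarrow> (nat \<Rightarrow> nat \<Rightarrow> complex)" where
  "opscale a f = (\<lambda>r s. a * f r s)"

definition Vin_gens :: "nat \<Rightarrow> int \<Rightarrow> (nat \<Rightarrow> nat \<Rightarrow> complex) set" where
  "Vin_gens d j = {(\<lambda>r s. if r = nat (int n + j) * d + m \<and> s = n * d + m then 1 else 0) | n m.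
       n < d \<and> m < d \<and> 0 \<le> int n + j \<and> int n + j < int d}"

definition dj :: "nat \<Rightarrow> int \<Rightarrow> nat" where
  "dj d j = vector_space.dim opscale (module.span opscale (Vin_gens d j))"

end

theory Submission
  imports Defs
begin

lemma adj_dims[simp]: "dim_row (mat_adjoint A) = dim_col A" "dim_col (mat_adjoint A) = dim_row A"
  unfolding mat_adjoint_def by auto

lemma adj_carrier[simp,intro]: "A \<in> carrier_mat n m \<Longrightarrow> mat_adjoint A \<in> carrier_mat m n"
  unfolding carrier_mat_def by simp

lemma adj_index[simp]: "i < dim_col A \<Longrightarrow> k < dim_row A \<Longrightarrow> mat_adjoint A $$ (i,k) = cnj (A $$ (k,i))"
  unfolding mat_adjoint_def by (simp add: mat_of_rows_def)

lemma adj_adj[simp]: "mat_adjoint (mat_adjoint (A::complex mat)) = A"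
  by (rule eq_matI, auto)

lemma adj_one[simp]: "mat_adjoint (1\<^sub>m n :: complex mat) = 1\<^sub>m n"
  by (rule eq_matI, auto)

lemma adj_mult: "A \<in> carrier_mat n m \<Longrightarrow> B \<in> carrier_mat m p \<Longrightarrow>
  mat_adjoint (A * B :: complex mat) = mat_adjoint B * mat_adjoint A"
  apply (rule eq_matI)
  apply (simp_all add: scalar_prod_def)
  apply (rule sum.cong, auto)
  done

lemma adj_scalar: "mat_adjoint (A :: complex mat) $$ (i,k) = (if i < dim_col A \<and> k < dim_row A then cnj (A $$ (k,i)) else mat_adjoint A $$ (i,k))"
  by simp

lemma unitaryI_left: "U \<in> carrier_mat n n \<Longrightarrow> mat_adjoint U * U = 1\<^sub>m n \<Longrightarrow> unitary n U"
  unfolding unitary_def using mat_mult_left_right_inverse[of "mat_adjoint U" n U] by auto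

lemma unitaryD: assumes "unitary n U"
  shows "U \<in> carrier_mat n n" "mat_adjoint U * U = 1\<^sub>m n" "U * mat_adjoint U = 1\<^sub>m n"
  using assms unfolding unitary_def by auto

lemma unitary_adj: "unitary n U \<Longrightarrow> unitary n (mat_adjoint U)"
  unfolding unitary_def by auto

lemma unitary_one: "unitary n (1\<^sub>m n)"
  unfolding unitary_def by auto

lemma unitary_mult: assumes U: "unitary n U" and V: "unitary n V" shows "unitary n (U * V)"
proof (rule unitaryI_left)
  have u: "U \<in> carrier_mat n n" "mat_adjoint U * U = 1\<^sub>m n" using unitaryD[OF U] by auto
  have v: "V \<in> carrier_mat n n" "mat_adjoint V * V = 1\<^sub>m n" using unitaryD[OF V] by auto
  show "U * V \<in> carrier_mat n n" using u v by auto
  have "mat_adjoint (U * V) * (U * V) = (mat_adjoint V * mat_adjoint U) * (U * V)"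
    using adj_mult[OF u(1) v(1)] by simp
  also have "\<dots> = mat_adjoint V * (mat_adjoint U * (U * V))"
    using u v by (simp add: assoc_mult_mat[of _ n n _ n _ n])
  also have "mat_adjoint U * (U * V) = (mat_adjoint U * U) * V"
    using u(1) v(1) by (simp add: assoc_mult_mat[of "mat_adjoint U" n n U n V n])
  also have "mat_adjoint V * ((mat_adjoint U * U) * V) = 1\<^sub>m n" using u v by simp
  finally show "mat_adjoint (U * V) * (U * V) = 1\<^sub>m n" .
qed

lemma cnj_mult_self: "cnj z * z = complex_of_real ((cmod z)^2)"
  by (metis complex_norm_square mult.commute)

lemma mult_cnj_self: "z * cnj z = complex_of_real ((cmod z)^2)"
  by (metis complex_norm_square)

lemma unitary_col_norm: assumes U: "unitary n U" and i: "i < n"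
  shows "(\<Sum>k<n. (cmod (U $$ (k,i)))^2) = 1"
proof -
  have u: "U \<in> carrier_mat n n" "mat_adjoint U * U = 1\<^sub>m n" using unitaryD[OF U] by auto
  have "complex_of_real (\<Sum>k<n. (cmod (U $$ (k,i)))^2) = (\<Sum>k<n. cnj (U $$ (k,i)) * U $$ (k,i))"
    by (simp only: of_real_sum cnj_mult_self)
  also have "\<dots> = (mat_adjoint U * U) $$ (i,i)"
    using u(1) i by (simp add: scalar_prod_def atLeast0LessThan)
  also have "\<dots> = 1" using u i by simp
  finally show ?thesis by (simp only: of_real_eq_1_iff)
qed

lemma unitary_row_norm: assumes U: "unitary n U" and i: "i < n"
  shows "(\<Sum>k<n. (cmod (U $$ (i,k)))^2) = 1"
proof -
  have u: "U \<in> carrier_mat n n" "U * mat_adjoint U = 1\<^sub>m n" using unitaryD[OF U] by auto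
  have "complex_of_real (\<Sum>k<n. (cmod (U $$ (i,k)))^2) = (\<Sum>k<n. U $$ (i,k) * cnj (U $$ (i,k)))"
    by (simp only: of_real_sum mult_cnj_self)
  also have "\<dots> = (U * mat_adjoint U) $$ (i,i)"
    using u(1) i by (simp add: scalar_prod_def atLeast0LessThan)
  also have "\<dots> = 1" using u i by simp
  finally show ?thesis by (simp only: of_real_eq_1_iff)
qed

lemma unitary_first_col:
  fixes v :: "complex vec"
  assumes v: "v \<in> carrier_vec n" and v0: "v \<noteq> 0\<^sub>v n"
  shows "\<exists>W c. unitary n W \<and> c \<noteq> 0 \<and> (\<forall>i<n. W $$ (i,0) = c * v $ i)"
proof -
  interpret cof_vec_space n "TYPE(complex)" .
  define b where "b = basis_completion v"
  from basis_completion[OF v v0, folded b_def]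
  have dist_b: "distinct b" and indep: "\<not> lin_dep (set b)" and bc: "set b \<subseteq> carrier_vec n"
    and hdb: "hd b = v" and len_b: "length b = n" by auto
  have n: "n \<noteq> 0"
  proof
    assume "n = 0"
    hence "v = 0\<^sub>v n" using v by (intro eq_vecI) auto
    thus False using v0 by simp
  qed
  then obtain vs where bv: "b = v # vs" using hdb len_b by (cases b) auto
  define ws where "ws = gram_schmidt n b"
  from gram_schmidt_result[OF bc dist_b indep refl, folded ws_def]
  have ws: "set ws \<subseteq> carrier_vec n" "corthogonal ws" "length ws = n" by (auto simp: len_b)
  have hdws: "hd ws = v" using gram_schmidt_hd[OF v, of vs] bv ws_def by simp
  define W0 where "W0 = mat_of_cols n ws"
  have orth: "corthogonal_mat W0" using orthogonal_mat_of_cols ws unfolding W0_def by auto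
  have W0c: "W0 \<in> carrier_mat n n" unfolding W0_def using ws by auto
  have ws0: "ws ! 0 = v" using hdws n ws(3) by (cases ws) auto
  have col0: "\<forall>i<n. W0 $$ (i,0) = v $ i" unfolding W0_def using n ws0 ws(3) by (simp add: mat_of_cols_def)
  define g where "g k = (\<Sum>i<n. (cmod (W0 $$ (i,k)))^2)" for k
  have B: "(mat_adjoint W0 * W0) $$ (i,k) = (\<Sum>l<n. cnj (W0 $$ (l,i)) * W0 $$ (l,k))"
    if "i < n" "k < n" for i k
    using W0c that by (simp add: scalar_prod_def atLeast0LessThan)
  have Bg: "(mat_adjoint W0 * W0) $$ (k,k) = complex_of_real (g k)" if "k < n" for k
    unfolding B[OF that that] g_def by (simp only: of_real_sum cnj_mult_self)
  have gpos: "g k > 0" if k: "k < n" for k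
  proof -
    have "(mat_adjoint W0 * W0) $$ (k,k) \<noteq> 0" using orth k W0c unfolding corthogonal_mat_def Let_def by auto
    hence "g k \<noteq> 0" using Bg[OF k] by auto
    moreover have "g k \<ge> 0" unfolding g_def by (intro sum_nonneg) auto
    ultimately show ?thesis by auto
  qed
  have offd: "(\<Sum>l<n. cnj (W0 $$ (l,i)) * W0 $$ (l,k)) = 0" if "i < n" "k < n" "i \<noteq> k" for i k
    using orth that W0c B[of i k] unfolding corthogonal_mat_def Let_def diagonal_mat_def by auto
  define W where "W = mat n n (\<lambda>(i,k). W0 $$ (i,k) / complex_of_real (sqrt (g k)))"
  have Wc: "W \<in> carrier_mat n n" unfolding W_def by auto
  have "mat_adjoint W * W = 1\<^sub>m n"
  proof (rule eq_matI)
    fix i k assume i: "i < dim_row (1\<^sub>m n :: complex mat)" and k: "k < dim_col (1\<^sub>m n :: complex mat)"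
    hence i: "i < n" and k: "k < n" by auto
    have "(mat_adjoint W * W) $$ (i,k) = (\<Sum>l<n. cnj (W $$ (l,i)) * W $$ (l,k))"
      using Wc i k by (simp add: scalar_prod_def atLeast0LessThan)
    also have "\<dots> = (\<Sum>l<n. cnj (W0 $$ (l,i)) * W0 $$ (l,k)) / (complex_of_real (sqrt (g i)) * complex_of_real (sqrt (g k)))"
      unfolding sum_divide_distrib using i k by (intro sum.cong) (auto simp: W_def)
    also have "\<dots> = 1\<^sub>m n $$ (i,k)"
    proof (cases "i = k")
      case True
      have "(\<Sum>l<n. cnj (W0 $$ (l,i)) * W0 $$ (l,k)) = complex_of_real (g k)"
        using Bg[OF k] B[OF k k] True by simp
      moreover have "complex_of_real (sqrt (g i)) * complex_of_real (sqrt (g k)) = complex_of_real (g k)"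
        using True gpos[OF k] by (simp flip: of_real_mult)
      ultimately show ?thesis using True gpos[OF k] i by simp
    next
      case False
      thus ?thesis using offd[OF i k False] i k by simp
    qed
    finally show "(mat_adjoint W * W) $$ (i,k) = 1\<^sub>m n $$ (i,k)" .
  qed (use Wc in auto)
  hence U: "unitary n W" using unitaryI_left[OF Wc] by auto
  have "\<forall>i<n. W $$ (i,0) = (1 / complex_of_real (sqrt (g 0))) * v $ i"
    using col0 n unfolding W_def by auto
  moreover have "1 / complex_of_real (sqrt (g 0)) \<noteq> 0" using gpos[of 0] n by simp
  ultimately show ?thesis using U by blast
qed

definition diagl :: "complex list \<Rightarrow> complex mat" where
  "diagl es = mat (length es) (length es) (\<lambda>(i,k). if i = k then es ! i else 0)"

lemma herm_index: "hermitian H \<Longrightarrow> H \<in> carrier_mat n n \<Longrightarrow> i < n \<Longrightarrow> k < n \<Longrightarrow> H $$ (i,k) = cnj (H $$ (k,i))"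
  unfolding hermitian_def by (metis adj_index carrier_matD(1) carrier_matD(2))

lemma hermitian_conj: assumes W: "W \<in> carrier_mat n n" and H: "H \<in> carrier_mat n n" and h: "hermitian H"
  shows "hermitian (mat_adjoint W * H * W)"
proof -
  have WH: "mat_adjoint W * H \<in> carrier_mat n n" using W H by auto
  have "mat_adjoint (mat_adjoint W * H * W) = mat_adjoint W * mat_adjoint (mat_adjoint W * H)"
    using adj_mult[OF WH W] by simp
  also have "mat_adjoint (mat_adjoint W * H) = mat_adjoint H * W"
    using adj_mult[of "mat_adjoint W" n n H n] W H by simp
  also have "mat_adjoint H = H" using h unfolding hermitian_def by simp
  finally show ?thesis unfolding hermitian_def using W H by (simp add: assoc_mult_mat[of _ n n _ n _ n] mult_carrier_mat)
qed

theorem spectral: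
  assumes "H \<in> carrier_mat n n" "hermitian H" "char_poly H = (\<Prod>e\<leftarrow>es. [:-e,1:])"
  shows "\<exists>U. unitary n U \<and> mat_adjoint U * H * U = diagl es"
  using assms
proof (induction es arbitrary: n H)
  case Nil
  have "degree (char_poly H) = n" using degree_monic_char_poly[OF Nil(1)] by simp
  hence n: "n = 0" using Nil(3) by simp
  have "mat_adjoint (1\<^sub>m n) * H * 1\<^sub>m n = diagl []"
    using Nil(1) n by (intro eq_matI) (auto simp: diagl_def)
  thus ?case using unitary_one by blast
next
  case (Cons e es n H)
  have Hc: "H \<in> carrier_mat n n" and h: "hermitian H" using Cons by auto
  have cp: "char_poly H = [:-e,1:] * (\<Prod>e\<leftarrow>es. [:-e,1:])" using Cons(4) by simp
  have "eigenvalue H e" unfolding eigenvalue_root_char_poly[OF Hc] cp by simp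
  from find_eigenvector[OF Hc this] obtain v where ev: "eigenvector H v e" by blast
  hence v: "v \<in> carrier_vec n" "v \<noteq> 0\<^sub>v n" "H *\<^sub>v v = e \<cdot>\<^sub>v v"
    unfolding eigenvector_def using Hc by auto
  have "n \<noteq> 0"
  proof
    assume "n = 0"
    hence "v = 0\<^sub>v n" using v by (intro eq_vecI) auto
    thus False using v by simp
  qed
  then obtain n' where n: "n = Suc n'" by (cases n) auto
  obtain W c where W: "unitary n W" and c: "c \<noteq> 0" and Wc0: "\<And>i. i < n \<Longrightarrow> W $$ (i,0) = c * v $ i"
    using unitary_first_col[OF v(1) v(2)] by blast
  have Wc: "W \<in> carrier_mat n n" and WW: "mat_adjoint W * W = 1\<^sub>m n" using unitaryD[OF W] by auto
  have colW: "col W 0 = c \<cdot>\<^sub>v v" using Wc Wc0 v n by (intro eq_vecI) auto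
  have HW0: "(H * W) $$ (i,0) = e * W $$ (i,0)" if i: "i < n" for i
  proof -
    have "(H * W) $$ (i,0) = row H i \<bullet> col W 0" using Hc Wc i n by simp
    also have "\<dots> = c * (row H i \<bullet> v)" unfolding colW using v(1) Hc i
      by (simp add: scalar_prod_smult_right)
    also have "row H i \<bullet> v = (H *\<^sub>v v) $ i" using Hc i by simp
    also have "\<dots> = e * v $ i" using v(3) v(1) i by simp
    finally show ?thesis using Wc0[OF i] by simp
  qed
  define A' where "A' = mat_adjoint W * H * W"
  have A'c: "A' \<in> carrier_mat n n" unfolding A'_def using Wc Hc by auto
  have A'h: "hermitian A'" unfolding A'_def by (rule hermitian_conj[OF Wc Hc h])
  have A'0: "A' $$ (i,0) = (if i = 0 then e else 0)" if i: "i < n" for i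
  proof -
    have "A' = mat_adjoint W * (H * W)" unfolding A'_def using Wc Hc by (simp add: assoc_mult_mat[of _ n n _ n _ n] mult_carrier_mat)
    hence "A' $$ (i,0) = (\<Sum>k<n. cnj (W $$ (k,i)) * (H * W) $$ (k,0))"
      using Wc Hc i n by (simp add: scalar_prod_def atLeast0LessThan)
    also have "\<dots> = e * (\<Sum>k<n. cnj (W $$ (k,i)) * W $$ (k,0))"
      by (simp add: HW0 sum_distrib_left mult.left_commute)
    also have "(\<Sum>k<n. cnj (W $$ (k,i)) * W $$ (k,0)) = (mat_adjoint W * W) $$ (i,0)"
      using Wc i n by (simp add: scalar_prod_def atLeast0LessThan)
    also have "\<dots> = (if i = 0 then 1 else 0)" using WW i n by simp
    finally show ?thesis by simp
  qed
  have ereal: "cnj e = e" using herm_index[OF A'h A'c, of 0 0] A'0[of 0] n by simp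
  have A'r0: "A' $$ (0,k) = (if k = 0 then e else 0)" if k: "k < n" for k
    using herm_index[OF A'h A'c, of 0 k] A'0[OF k] k n ereal by auto
  define A3 where "A3 = mat n' n' (\<lambda>(i,k). A' $$ (Suc i, Suc k))"
  have A3c: "A3 \<in> carrier_mat n' n'" unfolding A3_def by simp
  have A3h: "hermitian A3" unfolding hermitian_def
    by (rule eq_matI) (auto simp: A3_def n intro: herm_index[OF A'h A'c, symmetric])
  have blk: "A' = four_block_mat (mat 1 1 (\<lambda>_. e)) (0\<^sub>m 1 n') (0\<^sub>m n' 1) A3"
  proof (rule eq_matI)
    fix i k assume "i < dim_row (four_block_mat (mat 1 1 (\<lambda>_. e)) (0\<^sub>m 1 n') (0\<^sub>m n' 1) A3)"
      "k < dim_col (four_block_mat (mat 1 1 (\<lambda>_. e)) (0\<^sub>m 1 n') (0\<^sub>m n' 1) A3)"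
    hence i: "i < n" and k: "k < n" using A3c n by auto
    show "A' $$ (i,k) = four_block_mat (mat 1 1 (\<lambda>_. e)) (0\<^sub>m 1 n') (0\<^sub>m n' 1) A3 $$ (i,k)"
      using i k A3c A'0[OF i] A'r0[OF k] n
      by (cases i; cases k) (auto simp: A3_def)
  qed (use A'c A3c n in auto)
  have "similar_mat A' H" unfolding similar_mat_def similar_mat_wit_def Let_def
    by (rule exI[of _ "mat_adjoint W"], rule exI[of _ W]) (use Wc Hc WW unitaryD[OF W] A'_def in auto)
  hence "char_poly H = char_poly A'" using char_poly_similar by metis
  also have "\<dots> = char_poly (mat 1 1 (\<lambda>_. e)) * char_poly A3"
    unfolding blk by (rule char_poly_four_block_zeros_col) (use A3c in auto)
  also have "char_poly (mat 1 1 (\<lambda>_. e)) = [:-e,1:]"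
    by (simp add: char_poly_defs det_def sign_def)
  finally have "char_poly A3 = (\<Prod>e\<leftarrow>es. [:-e,1:])" unfolding cp
    by (metis mult_cancel_left pCons_eq_0_iff zero_neq_one)
  from Cons.IH[OF A3c A3h this] obtain U' where U': "unitary n' U'"
    and D: "mat_adjoint U' * A3 * U' = diagl es" by blast
  have U'c: "U' \<in> carrier_mat n' n'" and U'U': "mat_adjoint U' * U' = 1\<^sub>m n'" using unitaryD[OF U'] by auto
  have les: "length es = n'" using arg_cong[OF D, of dim_row] U'c by (simp add: diagl_def)
  define E where "E = four_block_mat (1\<^sub>m 1) (0\<^sub>m 1 n') (0\<^sub>m n' 1) U'"
  have Ec: "E \<in> carrier_mat n n" unfolding E_def using U'c n by auto
  have EH: "mat_adjoint E = four_block_mat (1\<^sub>m 1) (0\<^sub>m 1 n') (0\<^sub>m n' 1) (mat_adjoint U')"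
    unfolding E_def by (rule eq_matI) (use U'c in auto)
  have "mat_adjoint E * E = four_block_mat (1\<^sub>m 1) (0\<^sub>m 1 n') (0\<^sub>m n' 1) (1\<^sub>m n')"
    unfolding EH unfolding E_def using U'c U'U'
    by (subst mult_four_block_mat[of _ 1 1 _ n' _ n' _ _ 1 _ n']) auto
  hence "mat_adjoint E * E = 1\<^sub>m n" using n by simp
  hence E: "unitary n E" using unitaryI_left[OF Ec] by simp
  have U: "unitary n (W * E)" by (rule unitary_mult[OF W E])
  have "mat_adjoint (W * E) * H * (W * E) = mat_adjoint E * A' * E"
    unfolding A'_def adj_mult[OF Wc Ec] using Wc Ec Hc
    by (subst assoc_mult_mat[of _ n n _ n _ n], auto)+
  also have "\<dots> = four_block_mat (mat 1 1 (\<lambda>_. e)) (0\<^sub>m 1 n') (0\<^sub>m n' 1) (mat_adjoint U' * A3 * U')"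
  proof -
    have X: "mat_adjoint U' * A3 \<in> carrier_mat n' n'" using U'c A3c by auto
    have "mat_adjoint E * A' = four_block_mat (mat 1 1 (\<lambda>_. e)) (0\<^sub>m 1 n') (0\<^sub>m n' 1) (mat_adjoint U' * A3)"
      unfolding blk EH using U'c A3c X
      by (simp add: mult_four_block_mat[of _ 1 1 _ n' _ n' _ _ 1 _ n'] left_add_zero_mat[OF X])
    thus ?thesis unfolding E_def using U'c A3c X
      by (simp add: mult_four_block_mat[of _ 1 1 _ n' _ n' _ _ 1 _ n'])
  qed
  also have "\<dots> = diagl (e # es)" unfolding D
    by (rule eq_matI) (auto simp: diagl_def les n nth_Cons')
  finally show ?case using U by blast
qed

lemma prod_list_mset_eq: fixes f :: "'a \<Rightarrow> 'b::comm_monoid_mult" assumes m: "mset xs = mset ys" shows "prod_list (map f xs) = prod_list (map f ys)"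
proof -
  have "prod_list (map f xs) = prod_mset (mset (map f xs))" by (rule prod_mset_prod_list[symmetric])
  also have "mset (map f xs) = image_mset f (mset ys)" using m by simp
  also have "image_mset f (mset ys) = mset (map f ys)" by simp
  also have "prod_mset (mset (map f ys)) = prod_list (map f ys)" by (rule prod_mset_prod_list)
  finally show ?thesis .
qed

lemma linear_factors_mset:
  "(\<Prod>x\<leftarrow>xs. [:-x,1:]) = (\<Prod>y\<leftarrow>ys. ([:-y,1:] :: complex poly)) \<Longrightarrow> mset xs = mset ys"
proof (induction xs arbitrary: ys)
  case Nil
  have "length ys = 0" using degree_linear_factors[of uminus ys] Nil by simp
  thus ?case by simp
next
  case (Cons x xs)
  have "poly (\<Prod>y\<leftarrow>ys. [:-y,1:]) x = 0" unfolding Cons(2)[symmetric] by simp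
  hence "x \<in> set ys" by (auto simp: poly_prod_list_zero_iff)
  hence m: "mset ys = mset (x # remove1 x ys)" by simp
  have "(\<Prod>y\<leftarrow>ys. [:-y,1:]) = (\<Prod>y\<leftarrow>x # remove1 x ys. [:-y,1:])"
    by (rule prod_list_mset_eq[OF m])
  also have "\<dots> = [:-x,1:] * (\<Prod>y\<leftarrow>remove1 x ys. [:-y,1:])" by simp
  finally have "(\<Prod>y\<leftarrow>ys. [:-y,1:]) = [:-x,1:] * (\<Prod>y\<leftarrow>remove1 x ys. [:-y,1:])" .
  hence "[:-x,1:] * (\<Prod>y\<leftarrow>xs. [:-y,1:]) = [:-x,1:] * (\<Prod>y\<leftarrow>remove1 x ys. [:-y,1:])"
    using Cons(2) by simp
  hence "(\<Prod>y\<leftarrow>xs. [:-y,1:]) = (\<Prod>y\<leftarrow>remove1 x ys. ([:-y,1:] :: complex poly))"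
    by (metis mult_cancel_left pCons_eq_0_iff zero_neq_one)
  from Cons.IH[OF this] have "mset xs = mset (remove1 x ys)" .
  thus ?case using m by (metis mset.simps(2))
qed

lemma sorted_desc_unique:
  fixes xs ys :: "real list"
  assumes "sorted_wrt (\<ge>) xs" "sorted_wrt (\<ge>) ys" "mset xs = mset ys"
  shows "xs = ys"
proof -
  have "sorted (rev xs)" "sorted (rev ys)" using assms(1,2) by (simp_all add: sorted_wrt_rev)
  moreover have "mset (rev xs) = mset (rev ys)" using assms(3) by simp
  ultimately have "rev xs = rev ys" by (metis properties_for_sort)
  thus ?thesis by simp
qed

lemma sv_unique:
  fixes xs ys :: "real list"
  assumes "sorted_wrt (\<ge>) xs" "\<forall>s\<in>set xs. 0 \<le> s"
    "sorted_wrt (\<ge>) ys" "\<forall>s\<in>set ys. 0 \<le> s"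
    "(\<Prod>s\<leftarrow>xs. [:- complex_of_real (s^2), 1:]) = (\<Prod>s\<leftarrow>ys. [:- complex_of_real (s^2), 1:])"
  shows "xs = ys"
proof -
  let ?f = "\<lambda>s. complex_of_real (s^2)"
  have "mset (map ?f xs) = mset (map ?f ys)"
    using linear_factors_mset[of "map ?f xs" "map ?f ys"] assms(5) by (simp add: o_def)
  hence "image_mset (\<lambda>z. sqrt (Re z)) (image_mset ?f (mset xs)) = image_mset (\<lambda>z. sqrt (Re z)) (image_mset ?f (mset ys))"
    by simp
  hence "image_mset abs (mset xs) = image_mset abs (mset ys)"
    by (simp add: multiset.map_comp o_def)
  moreover have ab: "\<And>zs::real list. \<forall>s\<in>set zs. 0 \<le> s \<Longrightarrow> image_mset abs (mset zs) = mset zs"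
    subgoal for zs by (induct zs) auto done
  ultimately have "mset xs = mset ys" using assms(2,4) by simp
  thus ?thesis using sorted_desc_unique assms(1,3) by blast
qed

lemma sorted_desc_sqrt: "sorted_wrt (\<ge>) (xs::real list) \<Longrightarrow> sorted_wrt (\<ge>) (map sqrt xs)"
  by (induction xs) (auto simp: sorted_wrt_map)

definition sv_prop :: "complex mat \<Rightarrow> real list \<Rightarrow> bool" where
  "sv_prop A \<sigma> \<longleftrightarrow> length \<sigma> = dim_col A \<and> sorted_wrt (\<ge>) \<sigma> \<and>
      (\<forall>s\<in>set \<sigma>. 0 \<le> s) \<and>
      char_poly (mat_adjoint A * A) = (\<Prod>s\<leftarrow>\<sigma>. [:- complex_of_real (s^2), 1:])"

lemma AHA_diag: assumes A: "A \<in> carrier_mat n n" and U: "U \<in> carrier_mat n n" and i: "i < n"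
  shows "(mat_adjoint U * (mat_adjoint A * A) * U) $$ (i,i) = complex_of_real (\<Sum>k<n. (cmod ((A * U) $$ (k,i)))^2)"
proof -
  have "mat_adjoint U * (mat_adjoint A * A) * U = mat_adjoint (A * U) * (A * U)"
    using A U adj_mult[OF A U] by (subst assoc_mult_mat[of _ n n _ n _ n], auto)+
  also have "\<dots> $$ (i,i) = (\<Sum>k<n. cnj ((A * U) $$ (k,i)) * (A * U) $$ (k,i))"
    using A U i by (simp add: scalar_prod_def atLeast0LessThan)
  also have "\<dots> = complex_of_real (\<Sum>k<n. (cmod ((A * U) $$ (k,i)))^2)"
    by (simp only: of_real_sum cnj_mult_self)
  finally show ?thesis .
qed

lemma sv_exists: assumes A: "A \<in> carrier_mat n n"
  shows "\<exists>\<sigma>. sv_prop A \<sigma>"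
proof -
  let ?H = "mat_adjoint A * A"
  have Hc: "?H \<in> carrier_mat n n" using A by auto
  have Hh: "hermitian ?H" unfolding hermitian_def using adj_mult[of "mat_adjoint A" n n A n] A by simp
  obtain es where es: "char_poly ?H = (\<Prod>a\<leftarrow>es. [:- a, 1:])" "length es = n"
    using char_poly_factorized[OF Hc] by blast
  obtain U where U: "unitary n U" and D: "mat_adjoint U * ?H * U = diagl es"
    using spectral[OF Hc Hh es(1)] by blast
  have Uc: "U \<in> carrier_mat n n" using unitaryD[OF U] by auto
  define lam where "lam = map Re es"
  have esr: "es ! i = complex_of_real (lam ! i) \<and> lam ! i \<ge> 0" if i: "i < n" for i
  proof -
    have "es ! i = (mat_adjoint U * ?H * U) $$ (i,i)" unfolding D using i es(2) by (simp add: diagl_def)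
    also have "\<dots> = complex_of_real (\<Sum>k<n. (cmod ((A * U) $$ (k,i)))^2)" by (rule AHA_diag[OF A Uc i])
    finally have e: "es ! i = complex_of_real (\<Sum>k<n. (cmod ((A * U) $$ (k,i)))^2)" .
    hence "lam ! i = (\<Sum>k<n. (cmod ((A * U) $$ (k,i)))^2)" unfolding lam_def using i es(2) by simp
    with e show ?thesis by (auto intro: sum_nonneg)
  qed
  have es_lam: "es = map complex_of_real lam"
    by (rule nth_equalityI) (use esr es(2) in \<open>auto simp: lam_def\<close>)
  have lam_nn: "\<forall>x\<in>set lam. 0 \<le> x" using esr es(2) by (auto simp: lam_def in_set_conv_nth)
  define sl where "sl = rev (sort lam)"
  have msl: "mset sl = mset lam" unfolding sl_def by simp
  have sl_sorted: "sorted_wrt (\<ge>) sl" unfolding sl_def by (simp add: sorted_wrt_rev)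
  have sl_nn: "\<forall>x\<in>set sl. 0 \<le> x" using lam_nn msl by (metis set_mset_mset)
  define \<sigma> where "\<sigma> = map sqrt sl"
  have "sv_prop A \<sigma>"
    unfolding sv_prop_def
  proof (intro conjI)
    show "length \<sigma> = dim_col A" using A es(2) msl unfolding \<sigma>_def lam_def
      by (metis carrier_matD(2) length_map mset_eq_length)
    show "sorted_wrt (\<ge>) \<sigma>" unfolding \<sigma>_def by (rule sorted_desc_sqrt[OF sl_sorted])
    show "\<forall>s\<in>set \<sigma>. 0 \<le> s" unfolding \<sigma>_def using sl_nn by auto
    have "char_poly ?H = (\<Prod>x\<leftarrow>lam. [:- complex_of_real x, 1:])" unfolding es(1) es_lam by (simp add: o_def)
    also have "\<dots> = (\<Prod>x\<leftarrow>sl. [:- complex_of_real x, 1:])" by (rule prod_list_mset_eq[OF msl[symmetric]])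
    also have "\<dots> = (\<Prod>s\<leftarrow>\<sigma>. [:- complex_of_real (s^2), 1:])"
    proof -
      have h: "\<forall>x\<in>set zs. 0 \<le> x \<Longrightarrow> map (\<lambda>s. [:- complex_of_real (s^2), 1:]) (map sqrt zs) = map (\<lambda>x. [:- complex_of_real x, 1:]) zs" for zs
        by (induction zs) (simp_all add: real_sqrt_pow2 del: of_real_power)
      show ?thesis unfolding \<sigma>_def h[OF sl_nn] ..
    qed
    finally show "char_poly ?H = (\<Prod>s\<leftarrow>\<sigma>. [:- complex_of_real (s^2), 1:])" .
  qed
  thus ?thesis by blast
qed

lemma sv_prop_singular_values: assumes A: "A \<in> carrier_mat n n"
  shows "sv_prop A (singular_values A)"
proof -
  obtain \<sigma> where s: "sv_prop A \<sigma>" using sv_exists[OF A] by blast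
  have "singular_values A = \<sigma>" unfolding singular_values_def
  proof (rule the_equality)
    show "length \<sigma> = dim_col A \<and> sorted_wrt (\<ge>) \<sigma> \<and> (\<forall>s\<in>set \<sigma>. 0 \<le> s) \<and>
      char_poly (mat_adjoint A * A) = (\<Prod>s\<leftarrow>\<sigma>. [:- complex_of_real (s^2), 1:])"
      using s unfolding sv_prop_def by auto
    fix \<tau> assume "length \<tau> = dim_col A \<and> sorted_wrt (\<ge>) \<tau> \<and> (\<forall>s\<in>set \<tau>. 0 \<le> s) \<and>
      char_poly (mat_adjoint A * A) = (\<Prod>s\<leftarrow>\<tau>. [:- complex_of_real (s^2), 1:])"
    thus "\<tau> = \<sigma>" using s sv_unique unfolding sv_prop_def by metis
  qed
  thus ?thesis using s by simp
qed

lemma sv_diag: assumes A: "A \<in> carrier_mat n n"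
  shows "length (singular_values A) = n" "sorted_wrt (\<ge>) (singular_values A)"
    "\<forall>s\<in>set (singular_values A). 0 \<le> s"
    "\<exists>Q. unitary n Q \<and> mat_adjoint Q * (mat_adjoint A * A) * Q =
       diagl (map (\<lambda>s. complex_of_real (s^2)) (singular_values A))"
proof -
  have p: "sv_prop A (singular_values A)" by (rule sv_prop_singular_values[OF A])
  thus "length (singular_values A) = n" "sorted_wrt (\<ge>) (singular_values A)"
    "\<forall>s\<in>set (singular_values A). 0 \<le> s" using A unfolding sv_prop_def by auto
  have Hc: "mat_adjoint A * A \<in> carrier_mat n n" using A by auto
  have Hh: "hermitian (mat_adjoint A * A)" unfolding hermitian_def using adj_mult[of "mat_adjoint A" n n A n] A by simp
  have "char_poly (mat_adjoint A * A) = (\<Prod>e\<leftarrow>map (\<lambda>s. complex_of_real (s^2)) (singular_values A). [:- e, 1:])"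
    using p unfolding sv_prop_def by (simp add: o_def)
  from spectral[OF Hc Hh this]
  show "\<exists>Q. unitary n Q \<and> mat_adjoint Q * (mat_adjoint A * A) * Q =
       diagl (map (\<lambda>s. complex_of_real (s^2)) (singular_values A))" .
qed

lemma sum_sq_nonneg: "0 \<le> (\<Sum>i<n. (cmod (f i))^2)" by (intro sum_nonneg) auto

lemma svd_setup:
  assumes A: "A \<in> carrier_mat N N"
  defines "\<sigma> \<equiv> singular_values A"
  shows "\<exists>Q P. unitary N Q \<and> P \<in> carrier_mat N N \<and>
    (\<forall>s<N. \<forall>r<N. A $$ (s,r) = (\<Sum>i<N. complex_of_real (\<sigma>!i) * P $$ (s,i) * cnj (Q $$ (r,i)))) \<and>
    (\<forall>y<N. \<forall>i<N. (\<Sum>x<N. A $$ (y,x) * Q $$ (x,i)) = complex_of_real (\<sigma>!i) * P $$ (y,i)) \<and>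
    (\<forall>i<N. \<sigma>!i * (\<Sum>l<N. (cmod (P $$ (l,i)))^2) = \<sigma>!i) \<and>
    (\<forall>i<N. (\<Sum>l<N. (cmod (P $$ (l,i)))^2) \<le> 1) \<and>
    (\<forall>l<N. (\<Sum>i<N. (cmod (P $$ (l,i)))^2) \<le> 1)"
proof -
  have len: "length \<sigma> = N" and nn: "\<forall>s\<in>set \<sigma>. 0 \<le> s" using sv_diag[OF A] unfolding \<sigma>_def by auto
  obtain Q where Q: "unitary N Q" and D: "mat_adjoint Q * (mat_adjoint A * A) * Q =
       diagl (map (\<lambda>s. complex_of_real (s^2)) \<sigma>)" using sv_diag[OF A] unfolding \<sigma>_def by blast
  have Qc: "Q \<in> carrier_mat N N" and QQ: "Q * mat_adjoint Q = 1\<^sub>m N" using unitaryD[OF Q] by auto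
  have nni: "0 \<le> \<sigma>!i" if "i < N" for i using nn len that by auto
  define G where "G = A * Q"
  have Gc: "G \<in> carrier_mat N N" unfolding G_def using A Qc by auto
  have "mat_adjoint G * G = mat_adjoint Q * (mat_adjoint A * A) * Q"
    unfolding G_def adj_mult[OF A Qc] using A Qc by (subst assoc_mult_mat[of _ N N _ N _ N], auto)+
  hence GG: "(\<Sum>l<N. cnj (G $$ (l,i)) * G $$ (l,k)) = (if i = k then complex_of_real ((\<sigma>!i)^2) else 0)"
    if "i < N" "k < N" for i k
  proof -
    assume e: "mat_adjoint G * G = mat_adjoint Q * (mat_adjoint A * A) * Q"
    have "(\<Sum>l<N. cnj (G $$ (l,i)) * G $$ (l,k)) = (mat_adjoint G * G) $$ (i,k)"
      using Gc that by (simp add: scalar_prod_def atLeast0LessThan)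
    also have "\<dots> = (if i = k then complex_of_real ((\<sigma>!i)^2) else 0)"
      unfolding e D using that len by (simp add: diagl_def)
    finally show ?thesis .
  qed
  have Gnorm: "(\<Sum>l<N. (cmod (G $$ (l,i)))^2) = (\<sigma>!i)^2" if "i < N" for i
  proof -
    have "complex_of_real (\<Sum>l<N. (cmod (G $$ (l,i)))^2) = (\<Sum>l<N. cnj (G $$ (l,i)) * G $$ (l,i))"
      by (simp only: of_real_sum cnj_mult_self)
    also have "\<dots> = complex_of_real ((\<sigma>!i)^2)" using GG[OF that that] by simp
    finally show ?thesis by (simp only: of_real_eq_iff)
  qed
  have G0: "G $$ (l,i) = 0" if "i < N" "l < N" "\<not> \<sigma>!i > 0" for i l
  proof -
    have "\<sigma>!i = 0" using nni[OF that(1)] that(3) by simp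
    hence "(\<Sum>l<N. (cmod (G $$ (l,i)))^2) = 0" using Gnorm[OF that(1)] by simp
    hence "\<forall>l\<in>{..<N}. (cmod (G $$ (l,i)))^2 = 0" by (subst (asm) sum_nonneg_eq_0_iff) auto
    thus ?thesis using that(2) by auto
  qed
  define P where "P = mat N N (\<lambda>(l,i). if \<sigma>!i > 0 then G $$ (l,i) / complex_of_real (\<sigma>!i) else 0)"
  have Pc: "P \<in> carrier_mat N N" unfolding P_def by auto
  have GP: "G $$ (l,i) = complex_of_real (\<sigma>!i) * P $$ (l,i)" if "l < N" "i < N" for l i
    using that G0[OF that(2) that(1)] unfolding P_def by auto
  have P0: "P $$ (l,i) = 0" if "l < N" "i < N" "\<not> \<sigma>!i > 0" for l i
    using that unfolding P_def by auto
  have PP: "(\<Sum>l<N. cnj (P $$ (l,i)) * P $$ (l,k)) = (if i = k \<and> \<sigma>!i > 0 then 1 else 0)"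
    if i: "i < N" and k: "k < N" for i k
  proof (cases "\<sigma>!i > 0 \<and> \<sigma>!k > 0")
    case True
    have "(\<Sum>l<N. cnj (P $$ (l,i)) * P $$ (l,k)) = (\<Sum>l<N. cnj (G $$ (l,i)) * G $$ (l,k)) / (complex_of_real (\<sigma>!i) * complex_of_real (\<sigma>!k))"
      unfolding sum_divide_distrib using True i k by (intro sum.cong) (auto simp: P_def)
    also have "\<dots> = (if i = k \<and> \<sigma>!i > 0 then 1 else 0)" unfolding GG[OF i k] using True
      by (auto simp: power2_eq_square)
    finally show ?thesis .
  next
    case False
    hence "\<forall>l<N. cnj (P $$ (l,i)) * P $$ (l,k) = 0" using P0 i k by auto
    thus ?thesis using False by (auto intro!: sum.neutral)
  qed
  have Pcol: "(\<Sum>l<N. (cmod (P $$ (l,i)))^2) = (if \<sigma>!i > 0 then 1 else 0)" if i: "i < N" for i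
  proof -
    have "complex_of_real (\<Sum>l<N. (cmod (P $$ (l,i)))^2) = (\<Sum>l<N. cnj (P $$ (l,i)) * P $$ (l,i))"
      by (simp only: of_real_sum cnj_mult_self)
    also have "\<dots> = complex_of_real (if \<sigma>!i > 0 then 1 else 0)" using PP[OF i i] by simp
    finally show ?thesis by (simp only: of_real_eq_iff)
  qed
  (* row norms via the projection P P^H *)
  define E where "E = mat N N (\<lambda>(i,k). if i = k \<and> \<sigma>!i > 0 then 1 else (0::complex))"
  have PHP: "mat_adjoint P * P = E"
    by (rule eq_matI) (use Pc in \<open>auto simp: E_def scalar_prod_def atLeast0LessThan PP simp del: One_nat_def\<close>)
  have PE: "P * E = P"
  proof (rule eq_matI)
    fix l i assume "l < dim_row P" "i < dim_col P"
    hence l: "l < N" and i: "i < N" using Pc by auto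
    have "(P * E) $$ (l,i) = (\<Sum>k\<in>{0..<N}. P $$ (l,k) * E $$ (k,i))"
      using Pc l i by (simp add: E_def scalar_prod_def)
    also have "\<dots> = (\<Sum>k\<in>{0..<N}. if k = i then P $$ (l,i) * E $$ (i,i) else 0)"
      using i by (intro sum.cong) (auto simp: E_def)
    also have "\<dots> = P $$ (l,i)" using i l P0[OF l i] by (auto simp: E_def)
    finally show "(P * E) $$ (l,i) = P $$ (l,i)" .
  qed (use Pc in \<open>auto simp: E_def\<close>)
  define R where "R = P * mat_adjoint P"
  have Rc: "R \<in> carrier_mat N N" unfolding R_def using Pc by auto
  have RR: "R * R = R"
  proof -
    have "R * R = P * (mat_adjoint P * P) * mat_adjoint P"
      unfolding R_def using Pc by (subst assoc_mult_mat[of _ N N _ N _ N], auto)+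
    also have "\<dots> = R" unfolding PHP PE R_def ..
    finally show ?thesis .
  qed
  have Rh: "mat_adjoint R = R" unfolding R_def using adj_mult[of P N N "mat_adjoint P" N] Pc by simp
  have Prow: "(\<Sum>i<N. (cmod (P $$ (l,i)))^2) \<le> 1" if l: "l < N" for l
  proof -
    define t where "t = (\<Sum>i<N. (cmod (P $$ (l,i)))^2)"
    have t0: "t \<ge> 0" unfolding t_def by (rule sum_sq_nonneg)
    have Rll: "R $$ (l,l) = complex_of_real t"
    proof -
      have "R $$ (l,l) = (\<Sum>i<N. P $$ (l,i) * cnj (P $$ (l,i)))"
        unfolding R_def using Pc l by (simp add: scalar_prod_def atLeast0LessThan)
      also have "\<dots> = complex_of_real t" unfolding t_def by (simp only: of_real_sum mult_cnj_self)
      finally show ?thesis .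
    qed
    have "R $$ (l,l) = (R * R) $$ (l,l)" unfolding RR ..
    also have "\<dots> = (\<Sum>s<N. R $$ (l,s) * R $$ (s,l))" using Rc l by (simp add: scalar_prod_def atLeast0LessThan)
    also have "\<dots> = (\<Sum>s<N. R $$ (l,s) * cnj (R $$ (l,s)))"
    proof (intro sum.cong refl)
      fix s assume "s \<in> {..<N}"
      hence s: "s < N" by simp
      have "R $$ (s,l) = mat_adjoint R $$ (s,l)" using Rh by simp
      also have "\<dots> = cnj (R $$ (l,s))" using Rc s l by simp
      finally show "R $$ (l,s) * R $$ (s,l) = R $$ (l,s) * cnj (R $$ (l,s))" by simp
    qed
    also have "\<dots> = complex_of_real (\<Sum>s<N. (cmod (R $$ (l,s)))^2)" by (simp only: of_real_sum mult_cnj_self)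
    finally have "t = (\<Sum>s<N. (cmod (R $$ (l,s)))^2)" unfolding Rll by (simp only: of_real_eq_iff)
    also have "\<dots> \<ge> (cmod (R $$ (l,l)))^2"
      using member_le_sum[of l "{..<N}" "\<lambda>s. (cmod (R $$ (l,s)))^2"] l by auto
    finally have "t \<ge> t^2" unfolding Rll using t0 by simp
    hence tt: "t * t \<le> t" by (simp add: power2_eq_square)
    have "t \<le> 1"
    proof (rule ccontr)
      assume "\<not> t \<le> 1"
      hence "t * 1 < t * t" using t0 by (intro mult_strict_left_mono) auto
      thus False using tt by simp
    qed
    thus ?thesis unfolding t_def .
  qed
  have Arep: "A $$ (s,r) = (\<Sum>i<N. complex_of_real (\<sigma>!i) * P $$ (s,i) * cnj (Q $$ (r,i)))"
    if s: "s < N" and r: "r < N" for s r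
  proof -
    have "A = A * (Q * mat_adjoint Q)" using QQ A by simp
    also have "\<dots> = G * mat_adjoint Q" unfolding G_def using A Qc by (simp add: assoc_mult_mat[of _ N N _ N _ N])
    finally have "A $$ (s,r) = (G * mat_adjoint Q) $$ (s,r)" by simp
    also have "\<dots> = (\<Sum>i<N. G $$ (s,i) * cnj (Q $$ (r,i)))"
      using Gc Qc s r by (simp add: scalar_prod_def atLeast0LessThan)
    also have "\<dots> = (\<Sum>i<N. complex_of_real (\<sigma>!i) * P $$ (s,i) * cnj (Q $$ (r,i)))"
      using s by (intro sum.cong) (auto simp: GP)
    finally show ?thesis .
  qed
  have AQ: "(\<Sum>x<N. A $$ (y,x) * Q $$ (x,i)) = complex_of_real (\<sigma>!i) * P $$ (y,i)"
    if "y < N" "i < N" for y i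
  proof -
    have "(\<Sum>x<N. A $$ (y,x) * Q $$ (x,i)) = G $$ (y,i)"
      unfolding G_def using A Qc that by (simp add: scalar_prod_def atLeast0LessThan)
    thus ?thesis using GP that by simp
  qed
  show ?thesis
    apply (rule exI[of _ Q], rule exI[of _ P])
    using Q Pc Arep AQ Pcol Prow nni by (auto simp del: One_nat_def) (metis less_eq_real_def)
qed

lemma rearr:
  fixes \<sigma> :: "real list" and c :: "nat \<Rightarrow> real"
  assumes sorted: "sorted_wrt (\<ge>) \<sigma>" and nn: "\<forall>s\<in>set \<sigma>. 0 \<le> s"
    and c: "\<forall>i<length \<sigma>. 0 \<le> c i \<and> c i \<le> 1" and cs: "(\<Sum>i<length \<sigma>. c i) \<le> real m"
  shows "(\<Sum>i<length \<sigma>. \<sigma>!i * c i) \<le> sum_list (take m \<sigma>)"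
proof (cases "m < length \<sigma>")
  case False
  have "(\<Sum>i<length \<sigma>. \<sigma>!i * c i) \<le> (\<Sum>i<length \<sigma>. \<sigma>!i)"
  proof (rule sum_mono)
    fix i assume "i \<in> {..<length \<sigma>}"
    hence i: "i < length \<sigma>" by simp
    have "0 \<le> \<sigma>!i" using nn i by auto
    thus "\<sigma>!i * c i \<le> \<sigma>!i" using c i by (simp add: mult_left_le)
  qed
  also have "\<dots> = sum_list \<sigma>" by (simp add: sum_list_sum_nth atLeast0LessThan)
  also have "\<dots> = sum_list (take m \<sigma>)" using False by simp
  finally show ?thesis .
next
  case True
  define L where "L = length \<sigma>"
  define t where "t = \<sigma>!m"
  define ind where "ind i = (if i < m then 1 else (0::real))" for i
  have t0: "0 \<le> t" unfolding t_def using nn True by auto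
  have sm: "sum_list (take m \<sigma>) = (\<Sum>i<L. \<sigma>!i * ind i)"
  proof -
    have "sum_list (take m \<sigma>) = (\<Sum>i<m. \<sigma>!i)" using True by (simp add: sum_list_sum_nth atLeast0LessThan)
    also have "{..<m} = {i\<in>{..<L}. i < m}" using True unfolding L_def by auto
    also have "(\<Sum>i\<in>{i\<in>{..<L}. i < m}. \<sigma>!i) = (\<Sum>i<L. if i < m then \<sigma>!i else 0)"
      by (rule sum.inter_filter) simp
    also have "\<dots> = (\<Sum>i<L. \<sigma>!i * ind i)" unfolding ind_def by (intro sum.cong) auto
    finally show ?thesis .
  qed
  have si: "(\<Sum>i<L. ind i) = real m"
  proof -
    have "(\<Sum>i<L. ind i) = (\<Sum>i\<in>{i\<in>{..<L}. i < m}. 1)" unfolding ind_def by (rule sum.inter_filter[symmetric]) simp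
    also have "{i\<in>{..<L}. i < m} = {..<m}" using True unfolding L_def by auto
    finally show ?thesis by simp
  qed
  have key: "(\<Sum>i<L. (\<sigma>!i - t) * (c i - ind i)) \<le> 0"
  proof (rule sum_nonpos)
    fix i assume "i \<in> {..<L}"
    hence i: "i < L" by simp
    show "(\<sigma>!i - t) * (c i - ind i) \<le> 0"
    proof (cases "i < m")
      case True
      have "\<sigma>!m \<le> \<sigma>!i" using sorted_wrt_nth_less[OF sorted True] \<open>m < length \<sigma>\<close> by simp
      thus ?thesis using True c i unfolding t_def ind_def L_def by (intro mult_nonneg_nonpos) auto
    next
      case False
      show ?thesis
      proof (cases "i = m")
        case True thus ?thesis unfolding t_def by simp
      next
        case False2: False
        hence "m < i" using False by simp
        hence "\<sigma>!i \<le> \<sigma>!m" using sorted_wrt_nth_less[OF sorted \<open>m < i\<close>] i unfolding L_def by simp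
        thus ?thesis using False c i unfolding t_def ind_def L_def by (intro mult_nonpos_nonneg) auto
      qed
    qed
  qed
  have "(\<Sum>i<L. (\<sigma>!i - t) * (c i - ind i)) =
     (\<Sum>i<L. \<sigma>!i * c i) - (\<Sum>i<L. \<sigma>!i * ind i) - t * (\<Sum>i<L. c i) + t * (\<Sum>i<L. ind i)"
    by (simp add: algebra_simps sum_subtractf sum.distrib sum_distrib_left)
  hence "(\<Sum>i<L. \<sigma>!i * c i) - sum_list (take m \<sigma>) \<le> t * ((\<Sum>i<L. c i) - real m)"
    using key sm si by (simp add: algebra_simps)
  also have "\<dots> \<le> 0" using t0 cs unfolding L_def by (simp add: mult_nonneg_nonpos)
  finally show ?thesis unfolding L_def by simp
qed

lemma amgm: "(a::real) * b \<le> (a^2 + b^2) / 2"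
proof -
  have "0 \<le> (a - b)^2" by simp
  thus ?thesis by (simp add: power2_eq_square algebra_simps)
qed

lemma KF:
  assumes A: "A \<in> carrier_mat N N"
    and rows: "\<forall>r<N. (\<Sum>s<N. cmod (k r s)) \<le> 1" and cols: "\<forall>s<N. (\<Sum>r<N. cmod (k r s)) \<le> 1"
    and tot: "(\<Sum>r<N. \<Sum>s<N. cmod (k r s)) \<le> real m"
  shows "cmod (\<Sum>r<N. \<Sum>s<N. k r s * A $$ (s,r)) \<le> ky_fan_norm m A"
proof -
  define \<sigma> where "\<sigma> = singular_values A"
  have len: "length \<sigma> = N" and sorted: "sorted_wrt (\<ge>) \<sigma>" and nn: "\<forall>s\<in>set \<sigma>. 0 \<le> s"
    using sv_diag[OF A] unfolding \<sigma>_def by auto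
  have nni: "0 \<le> \<sigma>!i" if "i < N" for i using nn len that by auto
  obtain Q P where Q: "unitary N Q" and Pc: "P \<in> carrier_mat N N"
    and Arep: "\<forall>s<N. \<forall>r<N. A $$ (s,r) = (\<Sum>i<N. complex_of_real (\<sigma>!i) * P $$ (s,i) * cnj (Q $$ (r,i)))"
    and Pcol: "\<forall>i<N. (\<Sum>l<N. (cmod (P $$ (l,i)))^2) \<le> 1"
    and Prow: "\<forall>l<N. (\<Sum>i<N. (cmod (P $$ (l,i)))^2) \<le> 1"
    using svd_setup[OF A] unfolding \<sigma>_def by blast
  define z where "z i = (\<Sum>r<N. \<Sum>s<N. k r s * P $$ (s,i) * cnj (Q $$ (r,i)))" for i
  define b where "b r s i = cmod (k r s) * ((cmod (P $$ (s,i)))^2 + (cmod (Q $$ (r,i)))^2) / 2" for r s i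
  define c where "c i = (\<Sum>r<N. \<Sum>s<N. b r s i)" for i
  have S: "(\<Sum>r<N. \<Sum>s<N. k r s * A $$ (s,r)) = (\<Sum>i<N. complex_of_real (\<sigma>!i) * z i)"
  proof -
    have "(\<Sum>r<N. \<Sum>s<N. k r s * A $$ (s,r)) =
        (\<Sum>r<N. \<Sum>s<N. \<Sum>i<N. complex_of_real (\<sigma>!i) * (k r s * P $$ (s,i) * cnj (Q $$ (r,i))))"
      using Arep by (intro sum.cong refl) (simp add: sum_distrib_left mult_ac)
    also have "\<dots> = (\<Sum>r<N. \<Sum>i<N. \<Sum>s<N. complex_of_real (\<sigma>!i) * (k r s * P $$ (s,i) * cnj (Q $$ (r,i))))"
      by (intro sum.cong refl sum.swap)
    also have "\<dots> = (\<Sum>i<N. \<Sum>r<N. \<Sum>s<N. complex_of_real (\<sigma>!i) * (k r s * P $$ (s,i) * cnj (Q $$ (r,i))))"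
      by (rule sum.swap)
    also have "\<dots> = (\<Sum>i<N. complex_of_real (\<sigma>!i) * z i)"
      unfolding z_def by (simp add: sum_distrib_left)
    finally show ?thesis .
  qed
  have zc: "cmod (z i) \<le> c i" for i
  proof -
    have "cmod (z i) \<le> (\<Sum>r<N. cmod (\<Sum>s<N. k r s * P $$ (s,i) * cnj (Q $$ (r,i))))"
      unfolding z_def by (rule norm_sum)
    also have "\<dots> \<le> (\<Sum>r<N. \<Sum>s<N. cmod (k r s * P $$ (s,i) * cnj (Q $$ (r,i))))"
      by (intro sum_mono norm_sum)
    also have "\<dots> \<le> c i" unfolding c_def b_def
    proof (intro sum_mono)
      fix r s
      have "cmod (P $$ (s,i)) * cmod (Q $$ (r,i)) \<le> ((cmod (P $$ (s,i)))^2 + (cmod (Q $$ (r,i)))^2) / 2"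
        by (rule amgm)
      hence "cmod (k r s) * (cmod (P $$ (s,i)) * cmod (Q $$ (r,i))) \<le> cmod (k r s) * (((cmod (P $$ (s,i)))^2 + (cmod (Q $$ (r,i)))^2) / 2)"
        by (intro mult_left_mono) auto
      thus "cmod (k r s * P $$ (s,i) * cnj (Q $$ (r,i))) \<le> cmod (k r s) * ((cmod (P $$ (s,i)))^2 + (cmod (Q $$ (r,i)))^2) / 2"
        by (simp add: norm_mult mult_ac)
    qed
    finally show ?thesis .
  qed
  have c0: "0 \<le> c i" for i unfolding c_def b_def by (intro sum_nonneg) auto
  have c1: "c i \<le> 1" if i: "i < N" for i
  proof -
    have "c i = (\<Sum>r<N. \<Sum>s<N. cmod (k r s) * (cmod (P $$ (s,i)))^2) / 2 + (\<Sum>r<N. \<Sum>s<N. cmod (k r s) * (cmod (Q $$ (r,i)))^2) / 2"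
      unfolding c_def b_def by (simp add: sum.distrib algebra_simps sum_divide_distrib flip: sum_divide_distrib)
    also have "(\<Sum>r<N. \<Sum>s<N. cmod (k r s) * (cmod (P $$ (s,i)))^2) = (\<Sum>s<N. (cmod (P $$ (s,i)))^2 * (\<Sum>r<N. cmod (k r s)))"
      by (subst sum.swap) (simp add: sum_distrib_left sum_distrib_right mult_ac)
    also have "\<dots> \<le> (\<Sum>s<N. (cmod (P $$ (s,i)))^2 * 1)"
      using cols by (intro sum_mono mult_left_mono) auto
    also have "(\<Sum>r<N. \<Sum>s<N. cmod (k r s) * (cmod (Q $$ (r,i)))^2) = (\<Sum>r<N. (cmod (Q $$ (r,i)))^2 * (\<Sum>s<N. cmod (k r s)))"
      by (simp add: sum_distrib_left sum_distrib_right mult_ac)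
    also have "\<dots> \<le> (\<Sum>r<N. (cmod (Q $$ (r,i)))^2 * 1)"
      using rows by (intro sum_mono mult_left_mono) auto
    finally have ci: "c i \<le> (\<Sum>s<N. (cmod (P $$ (s,i)))^2 * 1) / 2 + (\<Sum>r<N. (cmod (Q $$ (r,i)))^2 * 1) / 2" by simp
    have "(\<Sum>s<N. (cmod (P $$ (s,i)))^2) \<le> 1" using Pcol i by auto
    thus ?thesis using ci unitary_col_norm[OF Q i] by simp
  qed
  have csum: "(\<Sum>i<N. c i) \<le> real m"
  proof -
    have "(\<Sum>i<N. c i) = (\<Sum>r<N. \<Sum>s<N. \<Sum>i<N. b r s i)"
      unfolding c_def by (subst sum.swap) (intro sum.cong refl sum.swap)
    also have "\<dots> = (\<Sum>r<N. \<Sum>s<N. cmod (k r s) * ((\<Sum>i<N. (cmod (P $$ (s,i)))^2) + (\<Sum>i<N. (cmod (Q $$ (r,i)))^2)) / 2)"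
      unfolding b_def by (intro sum.cong refl) (simp add: sum.distrib flip: sum_divide_distrib sum_distrib_left)
    also have "\<dots> \<le> (\<Sum>r<N. \<Sum>s<N. cmod (k r s) * (1 + 1) / 2)"
    proof (intro sum_mono)
      fix r s assume r: "r \<in> {..<N}" and s: "s \<in> {..<N}"
      have "(\<Sum>i<N. (cmod (P $$ (s,i)))^2) + (\<Sum>i<N. (cmod (Q $$ (r,i)))^2) \<le> 1 + 1"
        using Prow unitary_row_norm[OF Q] r s by (intro add_mono) auto
      thus "cmod (k r s) * ((\<Sum>i<N. (cmod (P $$ (s,i)))^2) + (\<Sum>i<N. (cmod (Q $$ (r,i)))^2)) / 2 \<le> cmod (k r s) * (1 + 1) / 2"
        by (intro divide_right_mono mult_left_mono) auto
    qed
    also have "\<dots> = (\<Sum>r<N. \<Sum>s<N. cmod (k r s))" by simp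
    finally show ?thesis using tot by simp
  qed
  have "cmod (\<Sum>r<N. \<Sum>s<N. k r s * A $$ (s,r)) \<le> (\<Sum>i<N. cmod (complex_of_real (\<sigma>!i) * z i))"
    unfolding S by (rule norm_sum)
  also have "\<dots> \<le> (\<Sum>i<N. \<sigma>!i * c i)"
  proof (intro sum_mono)
    fix i assume "i \<in> {..<N}"
    hence i: "i < N" by simp
    show "cmod (complex_of_real (\<sigma>!i) * z i) \<le> \<sigma>!i * c i"
      using nni[OF i] zc[of i] by (simp add: norm_mult mult_left_mono)
  qed
  also have "\<dots> \<le> sum_list (take m \<sigma>)"
    using rearr[OF sorted nn, of c m] c0 c1 csum len by simp
  finally show ?thesis unfolding ky_fan_norm_def \<sigma>_def .
qed

lemma TN:
  assumes Z: "Z \<in> carrier_mat n n"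
  shows "\<exists>w. (\<forall>x<n. \<forall>y<n. cmod (w x y) \<le> 1) \<and>
      complex_of_real (trace_norm Z) = (\<Sum>x<n. \<Sum>y<n. w x y * Z $$ (y,x))"
proof -
  define \<sigma> where "\<sigma> = singular_values Z"
  have len: "length \<sigma> = n" using sv_diag[OF Z] unfolding \<sigma>_def by auto
  obtain Q P where Q: "unitary n Q" and Pc: "P \<in> carrier_mat n n"
    and AQ: "\<forall>y<n. \<forall>i<n. (\<Sum>x<n. Z $$ (y,x) * Q $$ (x,i)) = complex_of_real (\<sigma>!i) * P $$ (y,i)"
    and Pn: "\<forall>i<n. \<sigma>!i * (\<Sum>l<n. (cmod (P $$ (l,i)))^2) = \<sigma>!i"
    and Prow: "\<forall>l<n. (\<Sum>i<n. (cmod (P $$ (l,i)))^2) \<le> 1"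
    using svd_setup[OF Z] unfolding \<sigma>_def by blast
  define w where "w x y = (\<Sum>i<n. Q $$ (x,i) * cnj (P $$ (y,i)))" for x y
  have wb: "cmod (w x y) \<le> 1" if x: "x < n" and y: "y < n" for x y
  proof -
    have "cmod (w x y) \<le> (\<Sum>i<n. cmod (Q $$ (x,i) * cnj (P $$ (y,i))))" unfolding w_def by (rule norm_sum)
    also have "\<dots> \<le> (\<Sum>i<n. ((cmod (Q $$ (x,i)))^2 + (cmod (P $$ (y,i)))^2) / 2)"
      by (intro sum_mono, unfold norm_mult complex_mod_cnj, rule amgm)
    also have "\<dots> = ((\<Sum>i<n. (cmod (Q $$ (x,i)))^2) + (\<Sum>i<n. (cmod (P $$ (y,i)))^2)) / 2"
      by (simp add: sum.distrib flip: sum_divide_distrib)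
    also have "\<dots> \<le> 1" using unitary_row_norm[OF Q x] Prow y by simp
    finally show ?thesis .
  qed
  have "(\<Sum>x<n. \<Sum>y<n. w x y * Z $$ (y,x)) = (\<Sum>y<n. \<Sum>i<n. cnj (P $$ (y,i)) * (\<Sum>x<n. Z $$ (y,x) * Q $$ (x,i)))"
  proof -
    have "(\<Sum>x<n. \<Sum>y<n. w x y * Z $$ (y,x)) = (\<Sum>x<n. \<Sum>y<n. \<Sum>i<n. cnj (P $$ (y,i)) * (Z $$ (y,x) * Q $$ (x,i)))"
      unfolding w_def by (simp add: sum_distrib_left sum_distrib_right mult_ac)
    also have "\<dots> = (\<Sum>y<n. \<Sum>x<n. \<Sum>i<n. cnj (P $$ (y,i)) * (Z $$ (y,x) * Q $$ (x,i)))" by (rule sum.swap)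
    also have "\<dots> = (\<Sum>y<n. \<Sum>i<n. \<Sum>x<n. cnj (P $$ (y,i)) * (Z $$ (y,x) * Q $$ (x,i)))" by (intro sum.cong refl sum.swap)
    also have "\<dots> = (\<Sum>y<n. \<Sum>i<n. cnj (P $$ (y,i)) * (\<Sum>x<n. Z $$ (y,x) * Q $$ (x,i)))" by (simp add: sum_distrib_left)
    finally show ?thesis .
  qed
  also have "\<dots> = (\<Sum>y<n. \<Sum>i<n. complex_of_real (\<sigma>!i) * (cnj (P $$ (y,i)) * P $$ (y,i)))"
    using AQ by (intro sum.cong refl) (simp add: mult_ac)
  also have "\<dots> = (\<Sum>i<n. \<Sum>y<n. complex_of_real (\<sigma>!i) * (cnj (P $$ (y,i)) * P $$ (y,i)))" by (rule sum.swap)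
  also have "\<dots> = (\<Sum>i<n. complex_of_real (\<sigma>!i * (\<Sum>y<n. (cmod (P $$ (y,i)))^2)))"
    by (simp add: sum_distrib_left cnj_mult_self of_real_sum)
  also have "\<dots> = (\<Sum>i<n. complex_of_real (\<sigma>!i))"
    using Pn by (intro sum.cong refl arg_cong[where f=complex_of_real]) auto
  also have "\<dots> = complex_of_real (trace_norm Z)"
    unfolding trace_norm_def \<sigma>_def[symmetric] using len by (simp add: sum_list_sum_nth atLeast0LessThan of_real_sum)
  finally have eq: "(\<Sum>x<n. \<Sum>y<n. w x y * Z $$ (y,x)) = complex_of_real (trace_norm Z)" .
  show ?thesis using wb eq[symmetric] by blast
qed

lemma vs_opscale: "vector_space opscale"
  by unfold_locales (auto simp: opscale_def fun_eq_iff algebra_simps)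

lemma fun_sum_apply2: "finite t \<Longrightarrow> (\<Sum>v\<in>t. F v) r s = (\<Sum>v\<in>t. (F v r s :: complex))"
  by (induction t rule: finite_induct) auto

definition gen :: "nat \<Rightarrow> int \<Rightarrow> nat \<Rightarrow> nat \<Rightarrow> (nat \<Rightarrow> nat \<Rightarrow> complex)" where
  "gen d j n m = (\<lambda>r s. if r = nat (int n + j) * d + m \<and> s = n * d + m then 1 else 0)"

definition genI :: "nat \<Rightarrow> int \<Rightarrow> (nat \<times> nat) set" where
  "genI d j = {(n,m). n < d \<and> m < d \<and> 0 \<le> int n + j \<and> int n + j < int d}"

lemma Vin_gens_eq: "Vin_gens d j = (\<lambda>(n,m). gen d j n m) ` genI d j"
  unfolding Vin_gens_def genI_def gen_def by auto

lemma genI_finite: "finite (genI d j)"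
proof -
  have "genI d j \<subseteq> {..<d} \<times> {..<d}" unfolding genI_def by auto
  thus ?thesis by (rule finite_subset) auto
qed

lemma gen_at: assumes "m < d" "m' < d"
  shows "gen d j n' m' (nat (int n + j) * d + m) (n * d + m) = (if n' = n \<and> m' = m then 1 else 0)"
proof -
  have "(n * d + m = n' * d + m') \<longleftrightarrow> (n = n' \<and> m = m')"
  proof
    assume e: "n * d + m = n' * d + m'"
    have "(n * d + m) div d = n" "(n' * d + m') div d = n'" using assms by auto
    moreover have "(n * d + m) mod d = m" "(n' * d + m') mod d = m'" using assms by auto
    ultimately show "n = n' \<and> m = m'" using e by metis
  qed auto
  thus ?thesis unfolding gen_def by auto
qed

lemma Vin_indep: "\<not> module.dependent opscale (Vin_gens d j)"
proof
  interpret vs: vector_space opscale by (rule vs_opscale)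
  assume "vs.dependent (Vin_gens d j)"
  then obtain t u where t: "finite t" "t \<subseteq> Vin_gens d j" and s: "(\<Sum>v\<in>t. opscale (u v) v) = 0"
    and v0: "\<exists>v\<in>t. u v \<noteq> 0" unfolding vs.dependent_explicit by blast
  then obtain v0 where v0t: "v0 \<in> t" and uv0: "u v0 \<noteq> 0" by blast
  obtain n m where nm: "(n,m) \<in> genI d j" and v0g: "v0 = gen d j n m"
    using t(2) v0t unfolding Vin_gens_eq by auto
  have m: "m < d" using nm unfolding genI_def by auto
  let ?r = "nat (int n + j) * d + m" and ?s = "n * d + m"
  have "0 = (\<Sum>v\<in>t. opscale (u v) v) ?r ?s" using s by simp
  also have "\<dots> = (\<Sum>v\<in>t. u v * v ?r ?s)" unfolding fun_sum_apply2[OF t(1)] by (simp add: opscale_def)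
  also have "\<dots> = (\<Sum>v\<in>t. if v = v0 then u v else 0)"
  proof (intro sum.cong refl)
    fix v assume "v \<in> t"
    then obtain n' m' where nm': "(n',m') \<in> genI d j" and vg: "v = gen d j n' m'"
      using t(2) unfolding Vin_gens_eq by auto
    have m': "m' < d" using nm' unfolding genI_def by auto
    have "v ?r ?s = (if n' = n \<and> m' = m then 1 else 0)" unfolding vg by (rule gen_at[OF m m'])
    moreover have "(n' = n \<and> m' = m) \<longleftrightarrow> v = v0" unfolding vg v0g
    proof
      assume "gen d j n' m' = gen d j n m"
      hence "gen d j n' m' ?r ?s = gen d j n m ?r ?s" by simp
      thus "n' = n \<and> m' = m" using gen_at[OF m m'] gen_at[OF m m] by (auto split: if_splits)
    qed auto
    ultimately show "u v * v ?r ?s = (if v = v0 then u v else 0)" by auto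
  qed
  also have "\<dots> = u v0" using v0t t(1) by simp
  finally show False using uv0 by simp
qed

lemma dj_eq: "dj d j = card (Vin_gens d j)"
  unfolding dj_def using vector_space.dim_span_eq_card_independent[OF vs_opscale Vin_indep] .

lemma dj_ge: "card {r. r < d * d \<and> 0 \<le> int (r div d) + j \<and> int (r div d) + j < int d} \<le> dj d j"
proof -
  let ?A = "{r. r < d * d \<and> 0 \<le> int (r div d) + j \<and> int (r div d) + j < int d}"
  let ?f = "\<lambda>r. gen d j (r div d) (r mod d)"
  have d0: "d > 0" if "r \<in> ?A" for r using that by (cases d) auto
  have fin: "finite (Vin_gens d j)" unfolding Vin_gens_eq using genI_finite by simp
  have img: "?f ` ?A \<subseteq> Vin_gens d j"
  proof
    fix v assume "v \<in> ?f ` ?A"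
    then obtain r where r: "r \<in> ?A" and v: "v = ?f r" by blast
    have "r div d < d" using r by (simp add: less_mult_imp_div_less)
    moreover have "r mod d < d" using d0[OF r] by simp
    ultimately have "(r div d, r mod d) \<in> genI d j" using r unfolding genI_def by auto
    thus "v \<in> Vin_gens d j" unfolding Vin_gens_eq v by force
  qed
  have inj: "inj_on ?f ?A"
  proof
    fix r r' assume r: "r \<in> ?A" and r': "r' \<in> ?A" and e: "?f r = ?f r'"
    have m: "r mod d < d" "r' mod d < d" using d0[OF r] by auto
    have "?f r (nat (int (r div d) + j) * d + r mod d) (r div d * d + r mod d) = 1"
      by (simp only: gen_at[OF m(1) m(1)]) simp
    hence "?f r' (nat (int (r div d) + j) * d + r mod d) (r div d * d + r mod d) = 1" using e by metis
    hence "(if r' div d = r div d \<and> r' mod d = r mod d then 1 else 0) = (1::complex)"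
      by (simp only: gen_at[OF m(1) m(2)])
    hence "r' div d = r div d \<and> r' mod d = r mod d" by (auto split: if_splits)
    thus "r = r'" by (metis div_mult_mod_eq)
  qed
  have "card ?A \<le> card (Vin_gens d j)" by (rule card_inj_on_le[OF inj img fin])
  thus ?thesis unfolding dj_eq .
qed

lemma sum_split: fixes m d :: nat shows "(\<Sum>r<m*d. (f r :: 'a::comm_monoid_add)) = (\<Sum>x<m. \<Sum>b<d. f (x*d+b))"
proof -
  have "(\<Sum>r<m*d. f r) = (\<Sum>x<m. sum f {x*d..<x*d+d})" using sum.nat_group[where g=f and k=d and n=m] by simp
  also have "\<dots> = (\<Sum>x<m. \<Sum>b<d. f (x*d+b))"
  proof (rule sum.cong[OF refl])
    fix x assume "x \<in> {..<m}"
    have "sum f {0 + x*d..<d + x*d} = (\<Sum>b=0..<d. f (b + x*d))" by (rule sum.shift_bounds_nat_ivl)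
    thus "sum f {x*d..<x*d+d} = (\<Sum>b<d. f (x*d+b))" by (simp add: atLeast0LessThan add.commute)
  qed
  finally show ?thesis .
qed

lemma sum_le_one_unique:
  fixes g :: "'a \<Rightarrow> real"
  assumes fin: "finite S" and b: "\<forall>y\<in>S. 0 \<le> g y \<and> g y \<le> 1"
    and u: "\<forall>y\<in>S. \<forall>y'\<in>S. g y \<noteq> 0 \<longrightarrow> g y' \<noteq> 0 \<longrightarrow> y = y'"
  shows "sum g S \<le> 1"
proof (cases "\<exists>y\<in>S. g y \<noteq> 0")
  case False
  hence "sum g S = 0" by (intro sum.neutral) auto
  thus ?thesis by simp
next
  case True
  then obtain y0 where y0: "y0 \<in> S" "g y0 \<noteq> 0" by blast
  have "sum g S = g y0 + sum g (S - {y0})" using fin y0(1) by (simp add: sum.remove)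
  also have "sum g (S - {y0}) = 0" using u y0 by (intro sum.neutral) blast
  finally show ?thesis using b y0 by simp
qed

lemma mult_index_sum: "A \<in> carrier_mat n m \<Longrightarrow> B \<in> carrier_mat m p \<Longrightarrow> r < n \<Longrightarrow> s < p \<Longrightarrow>
  (A * B) $$ (r,s) = (\<Sum>t<m. A $$ (r,t) * B $$ (t,s))"
  by (simp add: scalar_prod_def atLeast0LessThan)

definition ell :: "nat \<Rightarrow> nat \<Rightarrow> nat" where "ell d r = r div d + r mod d"

lemma LAB_index: "r < d*d \<Longrightarrow> s < d*d \<Longrightarrow> LAB d $$ (r,s) = (if r = s then of_nat (ell d r) else 0)"
  unfolding LAB_def ell_def by simp

lemma LAB_carrier: "LAB d \<in> carrier_mat (d*d) (d*d)" unfolding LAB_def by simp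

lemma comm_block:
  assumes V: "V \<in> carrier_mat (d*d) (d*d)" and c: "V * LAB d = LAB d * V"
    and r: "r < d*d" and s: "s < d*d" and nz: "V $$ (r,s) \<noteq> 0"
  shows "ell d r = ell d s"
proof -
  let ?N = "d*d"
  have "(V * LAB d) $$ (r,s) = (\<Sum>u<?N. V $$ (r,u) * LAB d $$ (u,s))"
    using V LAB_carrier[of d] r s by (simp add: scalar_prod_def atLeast0LessThan)
  also have "\<dots> = (\<Sum>u<?N. if u = s then V $$ (r,s) * of_nat (ell d s) else 0)"
    using s by (intro sum.cong refl) (auto simp: LAB_index)
  also have "\<dots> = V $$ (r,s) * of_nat (ell d s)" using s by simp
  finally have e1: "(V * LAB d) $$ (r,s) = V $$ (r,s) * of_nat (ell d s)" .
  have "(LAB d * V) $$ (r,s) = (\<Sum>u<?N. LAB d $$ (r,u) * V $$ (u,s))"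
    using V LAB_carrier[of d] r s by (simp add: scalar_prod_def atLeast0LessThan)
  also have "\<dots> = (\<Sum>u<?N. if u = r then of_nat (ell d r) * V $$ (r,s) else 0)"
    using r by (intro sum.cong refl) (auto simp: LAB_index)
  also have "\<dots> = of_nat (ell d r) * V $$ (r,s)" using r by simp
  finally have e2: "(LAB d * V) $$ (r,s) = of_nat (ell d r) * V $$ (r,s)" .
  have "V $$ (r,s) * of_nat (ell d s) = V $$ (r,s) * of_nat (ell d r)" using c e1 e2 by (metis mult.commute)
  thus ?thesis using nz by auto
qed

definition modeL :: "nat \<Rightarrow> int \<Rightarrow> complex mat \<Rightarrow> complex mat" where
  "modeL d j X = mat (d*d) (d*d) (\<lambda>(r,s). if int (ell d r) = int (ell d s) + j then X $$ (r,s) else 0)"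

lemma PiAB_index: "r < d*d \<Longrightarrow> s < d*d \<Longrightarrow> PiAB d c $$ (r,s) = (if r = s \<and> int (ell d r) = c then 1 else 0)"
  unfolding PiAB_def ell_def by simp

lemma PiAB_carrier: "PiAB d c \<in> carrier_mat (d*d) (d*d)" unfolding PiAB_def by simp

lemma PiXPi:
  assumes X: "X \<in> carrier_mat (d*d) (d*d)" and r: "r < d*d" and s: "s < d*d"
  shows "(PiAB d a * X * PiAB d c) $$ (r,s) = (if int (ell d r) = a \<and> int (ell d s) = c then X $$ (r,s) else 0)"
proof -
  let ?N = "d*d"
  have L: "(PiAB d a * X) $$ (r,t) = (if int (ell d r) = a then X $$ (r,t) else 0)" if t: "t < ?N" for t
  proof -
    have "(PiAB d a * X) $$ (r,t) = (\<Sum>u<?N. PiAB d a $$ (r,u) * X $$ (u,t))"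
      using X PiAB_carrier[of d a] r t by (simp add: scalar_prod_def atLeast0LessThan)
    also have "\<dots> = (\<Sum>u<?N. if u = r then (if int (ell d r) = a then X $$ (r,t) else 0) else 0)"
      using r by (intro sum.cong refl) (auto simp: PiAB_index)
    also have "\<dots> = (if int (ell d r) = a then X $$ (r,t) else 0)" using r by simp
    finally show ?thesis .
  qed
  have PX: "PiAB d a * X \<in> carrier_mat ?N ?N" using X PiAB_carrier[of d a] by auto
  have "(PiAB d a * X * PiAB d c) $$ (r,s) = (\<Sum>t<?N. (PiAB d a * X) $$ (r,t) * PiAB d c $$ (t,s))"
    by (rule mult_index_sum[OF PX PiAB_carrier r s])
  also have "\<dots> = (\<Sum>t<?N. if t = s then (if int (ell d r) = a \<and> int (ell d s) = c then X $$ (r,s) else 0) else 0)"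
    using s by (intro sum.cong refl) (auto simp: PiAB_index L)
  also have "\<dots> = (if int (ell d r) = a \<and> int (ell d s) = c then X $$ (r,s) else 0)" using s by simp
  finally show ?thesis .
qed

lemma foldr_mode:
  assumes X: "X \<in> carrier_mat (d*d) (d*d)"
  shows "foldr (\<lambda>c acc. PiAB d (c + j) * X * PiAB d c + acc) cs (0\<^sub>m (d*d) (d*d)) \<in> carrier_mat (d*d) (d*d) \<and>
    (\<forall>r<d*d. \<forall>s<d*d. foldr (\<lambda>c acc. PiAB d (c + j) * X * PiAB d c + acc) cs (0\<^sub>m (d*d) (d*d)) $$ (r,s) =
      sum_list (map (\<lambda>c. if int (ell d r) = c + j \<and> int (ell d s) = c then X $$ (r,s) else 0) cs))"
proof (induction cs)
  case Nil
  then show ?case by simp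
next
  case (Cons c cs)
  let ?F = "foldr (\<lambda>c acc. PiAB d (c + j) * X * PiAB d c + acc) cs (0\<^sub>m (d*d) (d*d))"
  have Fc: "?F \<in> carrier_mat (d*d) (d*d)" using Cons by simp
  have Pc: "PiAB d (c + j) * X * PiAB d c \<in> carrier_mat (d*d) (d*d)" using X PiAB_carrier[of d "c+j"] PiAB_carrier[of d c] by auto
  show ?case
  proof (intro conjI allI impI)
    show "foldr (\<lambda>c acc. PiAB d (c + j) * X * PiAB d c + acc) (c # cs) (0\<^sub>m (d*d) (d*d)) \<in> carrier_mat (d*d) (d*d)"
      using Fc Pc by simp
    fix r s assume r: "r < d*d" and s: "s < d*d"
    have "foldr (\<lambda>c acc. PiAB d (c + j) * X * PiAB d c + acc) (c # cs) (0\<^sub>m (d*d) (d*d)) $$ (r,s)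
      = (PiAB d (c + j) * X * PiAB d c + ?F) $$ (r,s)" by simp
    also have "\<dots> = (PiAB d (c + j) * X * PiAB d c) $$ (r,s) + ?F $$ (r,s)"
      using Fc Pc r s by simp
    also have "\<dots> = (if int (ell d r) = c + j \<and> int (ell d s) = c then X $$ (r,s) else 0) +
       sum_list (map (\<lambda>c. if int (ell d r) = c + j \<and> int (ell d s) = c then X $$ (r,s) else 0) cs)"
      unfolding PiXPi[OF X r s, of "c + j" c] using Cons.IH r s by simp
    finally show "foldr (\<lambda>c acc. PiAB d (c + j) * X * PiAB d c + acc) (c # cs) (0\<^sub>m (d*d) (d*d)) $$ (r,s) =
      sum_list (map (\<lambda>c. if int (ell d r) = c + j \<and> int (ell d s) = c then X $$ (r,s) else 0) (c # cs))"
      by simp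
  qed
qed

lemma ell_bound: "s < d*d \<Longrightarrow> ell d s \<le> 2*d - 2"
proof -
  assume s: "s < d*d"
  hence d0: "d > 0" by (cases d) auto
  have "s div d < d" using s by (simp add: less_mult_imp_div_less)
  moreover have "s mod d < d" using d0 by simp
  ultimately show ?thesis unfolding ell_def by linarith
qed

lemma mode2_eq: assumes X: "X \<in> carrier_mat (d*d) (d*d)" shows "mode2 d j X = modeL d j X"
proof (rule eq_matI)
  note F = foldr_mode[OF X, of j "[0..2 * int d - 2]"]
  show "dim_row (mode2 d j X) = dim_row (modeL d j X)" "dim_col (mode2 d j X) = dim_col (modeL d j X)"
    using F unfolding mode2_def modeL_def by auto
  fix r s assume "r < dim_row (modeL d j X)" "s < dim_col (modeL d j X)"
  hence r: "r < d*d" and s: "s < d*d" unfolding modeL_def by auto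
  have "mode2 d j X $$ (r,s) = sum_list (map (\<lambda>c. if int (ell d r) = c + j \<and> int (ell d s) = c then X $$ (r,s) else 0) [0..2 * int d - 2])"
    using F r s unfolding mode2_def by auto
  also have "\<dots> = (\<Sum>c\<in>{0..2 * int d - 2}. if int (ell d r) = c + j \<and> int (ell d s) = c then X $$ (r,s) else 0)"
    by (subst sum_list_distinct_conv_sum_set[OF distinct_upto]) (simp only: set_upto)
  also have "\<dots> = (\<Sum>c\<in>{0..2 * int d - 2}. if c = int (ell d s) then (if int (ell d r) = int (ell d s) + j then X $$ (r,s) else 0) else 0)"
    by (intro sum.cong refl) auto
  also have "\<dots> = (if int (ell d s) \<in> {0..2 * int d - 2} then (if int (ell d r) = int (ell d s) + j then X $$ (r,s) else 0) else 0)"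
    by (rule sum.delta) simp
  also have "int (ell d s) \<in> {0..2 * int d - 2}"
  proof -
    have d0: "d > 0" using s by (cases d) auto
    thus ?thesis using ell_bound[OF s] by auto
  qed
  hence "(if int (ell d s) \<in> {0..2 * int d - 2} then (if int (ell d r) = int (ell d s) + j then X $$ (r,s) else 0) else 0)
     = (if int (ell d r) = int (ell d s) + j then X $$ (r,s) else 0)" by simp
  also have "\<dots> = modeL d j X $$ (r,s)" unfolding modeL_def using r s by simp
  finally show "mode2 d j X $$ (r,s) = modeL d j X $$ (r,s)" .
qed

lemma sv_conj: assumes V: "unitary n V" and M: "M \<in> carrier_mat n n"
  shows "singular_values (V * M * mat_adjoint V) = singular_values M"
proof -
  have Vc: "V \<in> carrier_mat n n" and VV: "mat_adjoint V * V = 1\<^sub>m n" "V * mat_adjoint V = 1\<^sub>m n"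
    using unitaryD[OF V] by auto
  let ?A = "V * M * mat_adjoint V"
  have Ac: "?A \<in> carrier_mat n n" using Vc M by auto
  have "mat_adjoint ?A = V * mat_adjoint M * mat_adjoint V"
    using adj_mult[of "V * M" n n "mat_adjoint V" n] adj_mult[OF Vc M] Vc M
    by (simp add: assoc_mult_mat[of _ n n _ n _ n])
  hence "mat_adjoint ?A * ?A = (V * mat_adjoint M) * mat_adjoint V * (V * M * mat_adjoint V)" by simp
  also have "\<dots> = (V * mat_adjoint M) * (mat_adjoint V * (V * M * mat_adjoint V))"
    by (rule assoc_mult_mat[of _ n n _ n _ n]) (use Vc M in auto)
  also have "mat_adjoint V * (V * M * mat_adjoint V) = (mat_adjoint V * (V * M)) * mat_adjoint V"
    by (rule assoc_mult_mat[of _ n n _ n _ n, symmetric]) (use Vc M in auto)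
  also have "mat_adjoint V * (V * M) = (mat_adjoint V * V) * M"
    by (rule assoc_mult_mat[of _ n n _ n _ n, symmetric]) (use Vc M in auto)
  also have "(mat_adjoint V * V) * M = M" using VV M by simp
  also have "(V * mat_adjoint M) * (M * mat_adjoint V) = ((V * mat_adjoint M) * M) * mat_adjoint V"
    by (rule assoc_mult_mat[of _ n n _ n _ n, symmetric]) (use Vc M in auto)
  also have "(V * mat_adjoint M) * M = V * (mat_adjoint M * M)"
    by (rule assoc_mult_mat[of _ n n _ n _ n]) (use Vc M in auto)
  finally have "mat_adjoint ?A * ?A = V * (mat_adjoint M * M) * mat_adjoint V" .
  moreover have "similar_mat (V * (mat_adjoint M * M) * mat_adjoint V) (mat_adjoint M * M)"
    unfolding similar_mat_def similar_mat_wit_def Let_def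
    by (rule exI[of _ V], rule exI[of _ "mat_adjoint V"]) (use Vc M VV in auto)
  ultimately have "char_poly (mat_adjoint ?A * ?A) = char_poly (mat_adjoint M * M)"
    by (simp only: char_poly_similar)
  moreover have "dim_col ?A = dim_col M" using Vc M by simp
  ultimately show ?thesis unfolding singular_values_def by simp
qed

lemma divmod_d: assumes "b < (d::nat)" shows "(x*d+b) div d = x" "(x*d+b) mod d = b"
  using assms by auto

lemma dm_eq: "(a::nat) mod d = b mod d \<Longrightarrow> int (a div d) = int (b div d) \<Longrightarrow> a = b"
  by (metis div_mult_mod_eq of_nat_eq_iff)

lemma per_V:
  assumes d0: "d > 0" and X: "X \<in> carrier_mat (d*d) (d*d)" and V: "unitary (d*d) V"
    and c: "V * LAB d = LAB d * V"
  shows "Mj j (ptrace_B d (V * X * mat_adjoint V)) \<le> ky_fan_norm (dj d j) (mode2 d j X)"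
proof -
  define N where "N = d*d"
  have Vc: "V \<in> carrier_mat N N" using unitaryD[OF V] unfolding N_def by auto
  have XN: "X \<in> carrier_mat N N" using X unfolding N_def .
  define Y where "Y = V * X * mat_adjoint V"
  have Yc: "Y \<in> carrier_mat N N" unfolding Y_def using Vc XN by auto
  define Z where "Z = mode1 j (ptrace_B d Y)"
  have Zc: "Z \<in> carrier_mat d d" unfolding Z_def mode1_def ptrace_B_def by simp
  have Zi: "Z $$ (y,x) = (if int y = int x + j then (\<Sum>b<d. Y $$ (y*d+b, x*d+b)) else 0)"
    if "y < d" "x < d" for y x
    using that unfolding Z_def mode1_def ptrace_B_def by simp
  obtain w where wb: "\<forall>x<d. \<forall>y<d. cmod (w x y) \<le> 1"
    and tn: "complex_of_real (trace_norm Z) = (\<Sum>x<d. \<Sum>y<d. w x y * Z $$ (y,x))"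
    using TN[OF Zc] by blast
  define k where "k r s = (if r mod d = s mod d \<and> int (s div d) = int (r div d) + j then w (r div d) (s div d) else 0)" for r s
  have kxy: "k (x*d+b) (y*d+b') = (if b' = b \<and> int y = int x + j then w x y else 0)"
    if "b < d" "b' < d" for x y b b'
    unfolding k_def using divmod_d[OF that(1)] divmod_d[OF that(2)] by auto
  have reidx: "(\<Sum>x<d. \<Sum>y<d. w x y * Z $$ (y,x)) = (\<Sum>r<N. \<Sum>s<N. k r s * Y $$ (s,r))"
  proof -
    have "(\<Sum>r<N. \<Sum>s<N. k r s * Y $$ (s,r)) = (\<Sum>x<d. \<Sum>b<d. \<Sum>s<N. k (x*d+b) s * Y $$ (s, x*d+b))"
      unfolding N_def by (rule sum_split)
    also have "\<dots> = (\<Sum>x<d. \<Sum>b<d. \<Sum>y<d. \<Sum>b'<d. k (x*d+b) (y*d+b') * Y $$ (y*d+b', x*d+b))"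
      unfolding N_def by (intro sum.cong refl sum_split)
    also have "\<dots> = (\<Sum>x<d. \<Sum>b<d. \<Sum>y<d. if int y = int x + j then w x y * Y $$ (y*d+b, x*d+b) else 0)"
    proof (intro sum.cong refl)
      fix x b y assume b: "b \<in> {..<d}"
      have "(\<Sum>b'<d. k (x*d+b) (y*d+b') * Y $$ (y*d+b', x*d+b)) =
          (\<Sum>b'<d. if b' = b then (if int y = int x + j then w x y * Y $$ (y*d+b, x*d+b) else 0) else 0)"
        using b by (intro sum.cong refl) (auto simp: kxy)
      also have "\<dots> = (if int y = int x + j then w x y * Y $$ (y*d+b, x*d+b) else 0)" using b by simp
      finally show "(\<Sum>b'<d. k (x*d+b) (y*d+b') * Y $$ (y*d+b', x*d+b)) =
          (if int y = int x + j then w x y * Y $$ (y*d+b, x*d+b) else 0)" .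
    qed
    also have "\<dots> = (\<Sum>x<d. \<Sum>y<d. \<Sum>b<d. if int y = int x + j then w x y * Y $$ (y*d+b, x*d+b) else 0)"
      by (intro sum.cong refl sum.swap)
    also have "\<dots> = (\<Sum>x<d. \<Sum>y<d. w x y * Z $$ (y,x))"
      by (intro sum.cong refl) (auto simp: Zi sum_distrib_left)
    finally show ?thesis by simp
  qed
  define M where "M = mode2 d j X"
  have MmL: "M = modeL d j X" unfolding M_def by (rule mode2_eq[OF X])
  have Mc: "M \<in> carrier_mat N N" unfolding MmL modeL_def N_def by simp
  define A where "A = V * M * mat_adjoint V"
  have Ac: "A \<in> carrier_mat N N" unfolding A_def using Vc Mc by auto
  have kell: "int (ell d s) = int (ell d r) + j" if "k r s \<noteq> 0" for r s
    using that unfolding k_def ell_def by (auto split: if_splits)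
  have Vell: "ell d r = ell d s" if "r < N" "s < N" "V $$ (r,s) \<noteq> 0" for r s
    using comm_block[of V d r s] Vc c that unfolding N_def by auto
  have trip: "(V * B * mat_adjoint V) $$ (s,r) = (\<Sum>u<N. \<Sum>t<N. V $$ (s,t) * B $$ (t,u) * cnj (V $$ (r,u)))"
    if B: "B \<in> carrier_mat N N" and s: "s < N" and r: "r < N" for B s r
  proof -
    have VB: "V * B \<in> carrier_mat N N" using Vc B by auto
    have "(V * B * mat_adjoint V) $$ (s,r) = (\<Sum>u<N. (V * B) $$ (s,u) * mat_adjoint V $$ (u,r))"
      by (rule mult_index_sum[OF VB adj_carrier[OF Vc] s r])
    also have "\<dots> = (\<Sum>u<N. (\<Sum>t<N. V $$ (s,t) * B $$ (t,u)) * cnj (V $$ (r,u)))"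
    proof (rule sum.cong[OF refl])
      fix u assume u: "u \<in> {..<N}"
      have f1: "(V * B) $$ (s,u) = (\<Sum>t<N. V $$ (s,t) * B $$ (t,u))"
        by (rule mult_index_sum[OF Vc B s]) (use u in simp)
      have f2: "mat_adjoint V $$ (u,r) = cnj (V $$ (r,u))" using Vc r u by simp
      show "(V * B) $$ (s,u) * mat_adjoint V $$ (u,r) = (\<Sum>t<N. V $$ (s,t) * B $$ (t,u)) * cnj (V $$ (r,u))"
        by (simp only: f1 f2)
    qed
    also have "\<dots> = (\<Sum>u<N. \<Sum>t<N. V $$ (s,t) * B $$ (t,u) * cnj (V $$ (r,u)))"
      by (simp add: sum_distrib_right)
    finally show ?thesis .
  qed
  have YA: "k r s * Y $$ (s,r) = k r s * A $$ (s,r)" if r: "r < N" and s: "s < N" for r s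
  proof (cases "k r s = 0")
    case False
    have e: "int (ell d s) = int (ell d r) + j" by (rule kell[OF False])
    have "Y $$ (s,r) = A $$ (s,r)"
      unfolding Y_def A_def trip[OF XN s r] trip[OF Mc s r]
    proof (intro sum.cong refl)
      fix u t assume u: "u \<in> {..<N}" and t: "t \<in> {..<N}"
      show "V $$ (s,t) * X $$ (t,u) * cnj (V $$ (r,u)) = V $$ (s,t) * M $$ (t,u) * cnj (V $$ (r,u))"
      proof (cases "V $$ (s,t) = 0 \<or> V $$ (r,u) = 0")
        case True thus ?thesis by auto
      next
        case False
        hence "ell d s = ell d t" "ell d r = ell d u" using Vell s r t u by auto
        hence "M $$ (t,u) = X $$ (t,u)" using e t u unfolding MmL modeL_def N_def by auto
        thus ?thesis by simp
      qed
    qed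
    thus ?thesis by simp
  qed simp
  have kb: "cmod (k r s) \<le> 1" if "r < N" "s < N" for r s
  proof -
    have "r div d < d" "s div d < d" using that unfolding N_def by (auto simp: less_mult_imp_div_less)
    thus ?thesis unfolding k_def using wb by auto
  qed
  have rows: "\<forall>r<N. (\<Sum>s<N. cmod (k r s)) \<le> 1"
  proof (intro allI impI sum_le_one_unique)
    fix r assume r: "r < N"
    show "finite {..<N}" by simp
    show "\<forall>y\<in>{..<N}. 0 \<le> cmod (k r y) \<and> cmod (k r y) \<le> 1" using kb r by auto
    show "\<forall>y\<in>{..<N}. \<forall>y'\<in>{..<N}. cmod (k r y) \<noteq> 0 \<longrightarrow> cmod (k r y') \<noteq> 0 \<longrightarrow> y = y'"
    proof (intro ballI impI)
      fix y y' assume "cmod (k r y) \<noteq> 0" "cmod (k r y') \<noteq> 0"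
      hence "y mod d = r mod d" "int (y div d) = int (r div d) + j" "y' mod d = r mod d" "int (y' div d) = int (r div d) + j"
        unfolding k_def by (auto split: if_splits)
      thus "y = y'" using dm_eq[of y d y'] by simp
    qed
  qed
  have cols: "\<forall>s<N. (\<Sum>r<N. cmod (k r s)) \<le> 1"
  proof (intro allI impI sum_le_one_unique)
    fix s assume s: "s < N"
    show "finite {..<N}" by simp
    show "\<forall>y\<in>{..<N}. 0 \<le> cmod (k y s) \<and> cmod (k y s) \<le> 1" using kb s by auto
    show "\<forall>y\<in>{..<N}. \<forall>y'\<in>{..<N}. cmod (k y s) \<noteq> 0 \<longrightarrow> cmod (k y' s) \<noteq> 0 \<longrightarrow> y = y'"
    proof (intro ballI impI)
      fix y y' assume "cmod (k y s) \<noteq> 0" "cmod (k y' s) \<noteq> 0"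
      hence "y mod d = s mod d" "int (s div d) = int (y div d) + j" "y' mod d = s mod d" "int (s div d) = int (y' div d) + j"
        unfolding k_def by (auto split: if_splits)
      thus "y = y'" using dm_eq[of y d y'] by simp
    qed
  qed
  define P where "P r = (0 \<le> int (r div d) + j \<and> int (r div d) + j < int d)" for r
  have rowP: "(\<Sum>s<N. cmod (k r s)) \<le> (if P r then 1 else 0)" if r: "r < N" for r
  proof (cases "P r")
    case True thus ?thesis using rows r by simp
  next
    case False
    have "k r s = 0" if s: "s < N" for s
    proof (rule ccontr)
      assume "k r s \<noteq> 0"
      hence "int (s div d) = int (r div d) + j" unfolding k_def by (auto split: if_splits)
      moreover have "s div d < d" using s unfolding N_def by (simp add: less_mult_imp_div_less)
      ultimately show False using False unfolding P_def by auto
    qed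
    thus ?thesis using False by simp
  qed
  have tot: "(\<Sum>r<N. \<Sum>s<N. cmod (k r s)) \<le> real (dj d j)"
  proof -
    have "(\<Sum>r<N. \<Sum>s<N. cmod (k r s)) \<le> (\<Sum>r<N. if P r then 1 else 0)"
      using rowP by (intro sum_mono) auto
    also have "(\<Sum>r<N. if P r then 1 else (0::real)) = (\<Sum>r\<in>{r\<in>{..<N}. P r}. 1)"
      by (rule sum.inter_filter[symmetric]) simp
    also have "\<dots> = real (card {r. r < d * d \<and> 0 \<le> int (r div d) + j \<and> int (r div d) + j < int d})"
      unfolding N_def P_def by simp
    also have "\<dots> \<le> real (dj d j)" using dj_ge by simp
    finally show ?thesis .
  qed
  have "cmod (\<Sum>r<N. \<Sum>s<N. k r s * A $$ (s,r)) \<le> ky_fan_norm (dj d j) A"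
    by (rule KF[OF Ac rows cols tot])
  also have "ky_fan_norm (dj d j) A = ky_fan_norm (dj d j) M"
    unfolding ky_fan_norm_def A_def using sv_conj[OF V] Mc unfolding N_def by simp
  finally have kf: "cmod (\<Sum>r<N. \<Sum>s<N. k r s * A $$ (s,r)) \<le> ky_fan_norm (dj d j) M" .
  have "(\<Sum>r<N. \<Sum>s<N. k r s * Y $$ (s,r)) = (\<Sum>r<N. \<Sum>s<N. k r s * A $$ (s,r))"
    using YA by (intro sum.cong refl) auto
  hence "complex_of_real (trace_norm Z) = (\<Sum>r<N. \<Sum>s<N. k r s * A $$ (s,r))" using tn reidx by simp
  hence "trace_norm Z \<le> cmod (\<Sum>r<N. \<Sum>s<N. k r s * A $$ (s,r))"
    by (metis abs_ge_self norm_of_real)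
  also note kf
  finally show ?thesis unfolding Mj_def Z_def Y_def M_def .
qed

theorem mainTheorem5:
  fixes d :: nat and \<rho> :: "complex mat" and j :: int
  assumes "density d \<rho>" and "j \<noteq> 0"
  shows "DeltaM_A d j \<rho> \<le> ky_fan_norm (dj d j) (mode2 d j (tensor d \<rho> \<rho>)) - Mj j \<rho>"
proof -
  have tr: "(\<Sum>i<d. \<rho> $$ (i,i)) = 1" using assms(1) unfolding density_def by auto
  have d0: "d > 0"
  proof (rule ccontr)
    assume "\<not> d > 0" hence "d = 0" by simp
    thus False using tr by simp
  qed
  have X: "tensor d \<rho> \<rho> \<in> carrier_mat (d*d) (d*d)" unfolding tensor_def by simp
  let ?S = "{Mj j (ptrace_B d (V * tensor d \<rho> \<rho> * mat_adjoint V)) | V.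
            unitary (d*d) V \<and> V * LAB d = LAB d * V}"
  have ne: "?S \<noteq> {}"
  proof -
    have "unitary (d*d) (1\<^sub>m (d*d))" by (rule unitary_one)
    moreover have "1\<^sub>m (d*d) * LAB d = LAB d * 1\<^sub>m (d*d)" using LAB_carrier[of d] by simp
    ultimately show ?thesis by blast
  qed
  have "Sup ?S \<le> ky_fan_norm (dj d j) (mode2 d j (tensor d \<rho> \<rho>))"
    by (rule cSup_least[OF ne]) (auto intro: per_V[OF d0 X])
  thus ?thesis unfolding DeltaM_A_def by simp
qed


end
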